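(* Fix a noise variance $\sigma_W^2>0$, a prior mean $\mu\in\mathbb{R}$ and a prior variance $\sigma^2>0$, and let $\lambda_\gamma(\mu,\sigma^2)$ denote the Gittins index defined in the context below. Then \[ \lambda_{\gamma}(\mu,\sigma^2) = \mu + \Phi^{-1}(\gamma)\,\sigma + o(1) \quad \text{as } \gamma \to 1, \] where $\Phi$ is the CDF of the standard normal distribution.
   Context: One-armed Gaussian bandit: the arm has unknown quality $\theta\sim N(\mu,\sigma^2)$ (the prior), and conditional on $\theta$ the rewards $R_0,R_1,R_2,\ldots$ are i.i.d. $N(\theta,\sigma_W^2)$, where $\sigma_W^2>0$ is a fixed noise variance. Let $\mathcal{H}_t$ be the $\sigma$-algebra generated by $R_0,\ldots,R_{t-1}$ ($\mathcal{H}_0$ trivial). For a discount factor $\gamma\in(0,1)$ and a tax $\lambda\in\mathbb{R}$, define \[ V_\gamma^\lambda(\mu,\sigma)=\sup_{\tau\ge 1}\mathbb{E}\Big[\sum_{t=0}^{\tau}\gamma^t(\theta-\lambda)\Big], \] where the supremum is over stopping times $\tau\ge 1$ (possibly infinite) with respect to the filtration $(\mathcal{H}_t)_{t\ge0}$ generated by the rewards, and the expectation is under the model above with prior $N(\mu,\sigma^2)$. The Gittins index is \[ \lambda_\gamma(\mu,\sigma^2)=\sup\{\lambda\in\mathbb{R} : V_\gamma^\lambda(\mu,\sigma)\ge 0\}. \] *)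

theory Defs
  imports "HOL-Probability.Probability"
begin

text \<open>Underlying probability space: \<omega> = (\<theta>, W) where \<theta> ~ N(\<mu>, \<sigma>^2) and
  W_0, W_1, ... are i.i.d.  Here \<sigma> and \<sigma>W are
  standard deviations (the prior variance is \<sigma>^2, the noise variance is \<sigma>W^2).\<close>

definition bandit_space :: "real \<Rightarrow> real \<Rightarrow> (real \<times> (nat \<Rightarrow> real)) measure" where
  "bandit_space \<mu> \<sigma> =
     density lborel (normal_density \<mu> \<sigma>) \<Otimes>\<^sub>M
     (\<Pi>\<^sub>M i\<in>(UNIV::nat set). density lborel std_normal_density)"

text \<open>Arm quality and rewards R_t = \<theta> + \<sigma>W * W_t, so that given \<theta> the
  rewards are i.i.d. N(\<theta>, \<sigma>W^2).\<close>

definition quality :: "real \<times> (nat \<Rightarrow> real) \<Rightarrow> real" where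
  "quality \<omega> = fst \<omega>"

definition reward :: "real \<Rightarrow> nat \<Rightarrow> real \<times> (nat \<Rightarrow> real) \<Rightarrow> real" where
  "reward \<sigma>W t \<omega> = fst \<omega> + \<sigma>W * snd \<omega> t"

text \<open>Filtration H_t = \<sigma>(R_0, ..., R_{t-1}), indexed by extended naturals
  (H_\<infinity> is generated by all rewards) so that stopping times may be infinite.\<close>

definition reward_filtration ::
  "real \<Rightarrow> real \<Rightarrow> real \<Rightarrow> enat \<Rightarrow> (real \<times> (nat \<Rightarrow> real)) measure" where
  "reward_filtration \<sigma>W \<mu> \<sigma> t =
     vimage_algebra (space (bandit_space \<mu> \<sigma>))
       (\<lambda>\<omega>. \<lambda>i\<in>{i. enat i < t}. reward \<sigma>W i \<omega>)
       (\<Pi>\<^sub>M i\<in>{i. enat i < t}. (borel :: real measure))"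

definition admissible_stopping_times ::
  "real \<Rightarrow> real \<Rightarrow> real \<Rightarrow> (real \<times> (nat \<Rightarrow> real) \<Rightarrow> enat) set" where
  "admissible_stopping_times \<sigma>W \<mu> \<sigma> =
     {\<tau>. stopping_time (reward_filtration \<sigma>W \<mu> \<sigma>) \<tau> \<and>
          (\<forall>\<omega>\<in>space (bandit_space \<mu> \<sigma>). 1 \<le> \<tau> \<omega>)}"

definition stop_payoff ::
  "real \<Rightarrow> real \<Rightarrow> real \<Rightarrow> real \<Rightarrow> real \<Rightarrow> (real \<times> (nat \<Rightarrow> real) \<Rightarrow> enat) \<Rightarrow> real" where
  "stop_payoff \<sigma>W \<mu> \<sigma> \<gamma> lam \<tau> =
     (\<integral>\<omega>. (\<Sum>t. if enat t \<le> \<tau> \<omega> then \<gamma> ^ t * (quality \<omega> - lam) else 0)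
        \<partial>bandit_space \<mu> \<sigma>)"

definition value_fun :: "real \<Rightarrow> real \<Rightarrow> real \<Rightarrow> real \<Rightarrow> real \<Rightarrow> real" where
  "value_fun \<sigma>W \<gamma> lam \<mu> \<sigma> =
     (SUP \<tau>\<in>admissible_stopping_times \<sigma>W \<mu> \<sigma>. stop_payoff \<sigma>W \<mu> \<sigma> \<gamma> lam \<tau>)"

definition gittins_index :: "real \<Rightarrow> real \<Rightarrow> real \<Rightarrow> real \<Rightarrow> real" where
  "gittins_index \<sigma>W \<gamma> \<mu> \<sigma> = Sup {lam. value_fun \<sigma>W \<gamma> lam \<mu> \<sigma> \<ge> 0}"

definition Phi :: "real \<Rightarrow> real" where
  "Phi x = measure (density lborel std_normal_density) {..x}"

definition Phi_inv :: "real \<Rightarrow> real" where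
  "Phi_inv p = (THE x. Phi x = p)"

end

theory Submission
  imports Defs "HOL-Real_Asymp.Real_Asymp"
begin


lemma phi_deriv: "(std_normal_density has_real_derivative (- x * std_normal_density x)) (at x)"
  unfolding std_normal_density_def[abs_def]
  by (auto intro!: derivative_eq_intros simp: power2_eq_square field_simps)

lemma phi_tendsto0: "(std_normal_density \<longlongrightarrow> 0) at_top"
  unfolding std_normal_density_def[abs_def] by real_asymp

lemma phi_x_tendsto0: "((\<lambda>x. x * std_normal_density x) \<longlongrightarrow> 0) at_top"
  unfolding std_normal_density_def by real_asymp

lemma G1:
  assumes "0 \<le> y"
  shows "set_integrable lborel {y<..} (\<lambda>z. z * std_normal_density z)"
    "(LBINT z:{y<..}. z * std_normal_density z) = std_normal_density y"
proof -
  have D: "\<And>x. ereal y < ereal x \<Longrightarrow> ereal x < \<infinity> \<Longrightarrow>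
      ((\<lambda>z. - std_normal_density z) has_real_derivative x * std_normal_density x) (at x)"
    using phi_deriv by (auto intro!: derivative_eq_intros)
  have C: "\<And>x. isCont (\<lambda>z. z * std_normal_density z) x"
    unfolding std_normal_density_def by (auto intro!: continuous_intros)
  have N: "AE x in lborel. ereal y < ereal x \<longrightarrow> ereal x < \<infinity> \<longrightarrow> 0 \<le> x * std_normal_density x"
    using assms by (auto intro!: AE_I2)
  have L1: "(((\<lambda>z. - std_normal_density z) \<circ> real_of_ereal) \<longlongrightarrow> - std_normal_density y) (at_right (ereal y))"
  proof -
    have "isCont (\<lambda>z. - std_normal_density z) y"
      unfolding std_normal_density_def by (auto intro!: continuous_intros)
    then have "((\<lambda>z. - std_normal_density z) \<longlongrightarrow> - std_normal_density y) (at_right y)"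
      by (simp add: isCont_def filterlim_at_split)
    then show ?thesis unfolding ereal_tendsto_simps .
  qed
  have L2: "(((\<lambda>z. - std_normal_density z) \<circ> real_of_ereal) \<longlongrightarrow> 0) (at_left \<infinity>)"
    unfolding ereal_tendsto_simps using tendsto_minus[OF phi_tendsto0] by simp
  note R = interval_integral_FTC_nonneg[of "ereal y" \<infinity> "\<lambda>z. - std_normal_density z", OF _ D C N L1 L2]
  show "set_integrable lborel {y<..} (\<lambda>z. z * std_normal_density z)"
    using R(1) by simp
  show "(LBINT z:{y<..}. z * std_normal_density z) = std_normal_density y"
    using R(2) by (simp add: interval_integral_to_infinity_eq)
qed

definition Qf :: "real \<Rightarrow> real" where
  "Qf y = measure (density lborel std_normal_density) {y<..}"

lemma prob_std: "prob_space (density lborel std_normal_density)"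
  by (rule prob_space_normal_density) simp

lemma Phi_Qf: "Phi y + Qf y = 1"
proof -
  interpret P: prob_space "density lborel std_normal_density" by (rule prob_std)
  have "Qf y = P.prob (space (density lborel std_normal_density) - {..y})"
    unfolding Qf_def by (intro arg_cong[where f="P.prob"]) auto
  also have "\<dots> = 1 - Phi y" unfolding Phi_def by (subst P.prob_compl) auto
  finally show ?thesis by simp
qed

lemma phi_set_integrable: "set_integrable lborel A std_normal_density" if "A \<in> sets borel"
  unfolding set_integrable_def using that
  by (intro integrable_mult_indicator) auto

lemma Qf_integral: "Qf y = (LBINT z:{y<..}. std_normal_density z)"
proof -
  have "Qf y = integral\<^sup>L (density lborel std_normal_density) (indicator {y<..})"
    unfolding Qf_def by simp
  also have "\<dots> = (\<integral>z. std_normal_density z * indicator {y<..} z \<partial>lborel)"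
    by (subst integral_real_density) auto
  also have "\<dots> = (LBINT z:{y<..}. std_normal_density z)"
    unfolding set_lebesgue_integral_def by (simp add: mult.commute)
  finally show ?thesis .
qed

lemma Qf_nonneg: "0 \<le> Qf y" unfolding Qf_def by simp

lemma Qf_upper:
  assumes "0 < y"
  shows "Qf y \<le> std_normal_density y / y"
proof -
  have "Qf y \<le> (LBINT z:{y<..}. (1/y) * (z * std_normal_density z))"
    unfolding Qf_integral
  proof (rule set_integral_mono)
    show "set_integrable lborel {y<..} std_normal_density" by (rule phi_set_integrable) auto
    show "set_integrable lborel {y<..} (\<lambda>z. (1/y) * (z * std_normal_density z))"
      using G1(1)[of y] assms by auto
    fix z assume "z \<in> {y<..}"
    then show "std_normal_density z \<le> (1/y) * (z * std_normal_density z)"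
      using assms by (auto simp: field_simps intro!: mult_right_mono)
  qed
  also have "\<dots> = std_normal_density y / y"
    using G1(2)[of y] assms by simp
  finally show ?thesis .
qed

lemma Qf_lower:
  assumes "2 \<le> y"
  shows "(1/y - 1/y^3) * std_normal_density y \<le> Qf y"
proof -
  define F where "F = (\<lambda>z::real. - ((1/z - 1/z^3) * std_normal_density z))"
  define f where "f = (\<lambda>z::real. (1 - 3/z^4) * std_normal_density z)"
  have D: "(F has_real_derivative f x) (at x)" if "ereal y < ereal x" "ereal x < \<infinity>" for x
  proof -
    have x: "0 < x" using that assms by simp
    have d1: "((\<lambda>z::real. 1/z - 1/z^3) has_real_derivative (- 1/x^2 + 3/x^4)) (at x)"
      using x by (auto intro!: derivative_eq_intros simp: field_simps power2_eq_square power3_eq_cube power4_eq_xxxx)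
    have "(F has_real_derivative
       - ((- 1/x^2 + 3/x^4) * std_normal_density x + (- x * std_normal_density x) * (1/x - 1/x^3))) (at x)"
      unfolding F_def by (intro DERIV_minus DERIV_mult d1 phi_deriv)
    moreover have "- ((- 1/x^2 + 3/x^4) * std_normal_density x + (- x * std_normal_density x) * (1/x - 1/x^3))
       = f x"
      unfolding f_def using x by (simp add: field_simps power2_eq_square power3_eq_cube power4_eq_xxxx)
    ultimately show ?thesis by simp
  qed
  have C: "isCont f x" if "ereal y < ereal x" "ereal x < \<infinity>" for x
  proof -
    have x: "0 < x" using that assms by simp
    show ?thesis unfolding f_def std_normal_density_def using x by (auto intro!: continuous_intros)
  qed
  have N: "AE x in lborel. ereal y < ereal x \<longrightarrow> ereal x < \<infinity> \<longrightarrow> 0 \<le> f x"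
  proof (intro AE_I2 impI)
    fix x assume "ereal y < ereal x"
    then have x: "2 \<le> x" using assms by simp
    have "(2::real)^4 \<le> x^4" using x by (intro power_mono) auto
    then have "3 / x^4 \<le> 1" using x by (simp add: field_simps)
    then show "0 \<le> f x" unfolding f_def by simp
  qed
  have L1: "((F \<circ> real_of_ereal) \<longlongrightarrow> F y) (at_right (ereal y))"
  proof -
    have "isCont F y"
      unfolding F_def std_normal_density_def using assms by (auto intro!: continuous_intros)
    then have "(F \<longlongrightarrow> F y) (at_right y)"
      by (simp add: isCont_def filterlim_at_split)
    then show ?thesis unfolding ereal_tendsto_simps .
  qed
  have L2: "((F \<circ> real_of_ereal) \<longlongrightarrow> 0) (at_left \<infinity>)"
    unfolding ereal_tendsto_simps F_def std_normal_density_def by real_asymp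
  note R = interval_integral_FTC_nonneg[of "ereal y" \<infinity> F f, OF _ D C N L1 L2]
  have I: "set_integrable lborel {y<..} f" using R(1) by simp
  have E: "(LBINT z:{y<..}. f z) = (1/y - 1/y^3) * std_normal_density y"
    using R(2) by (simp add: interval_integral_to_infinity_eq F_def)
  have "(LBINT z:{y<..}. f z) \<le> (LBINT z:{y<..}. std_normal_density z)"
  proof (rule set_integral_mono[OF I])
    show "set_integrable lborel {y<..} std_normal_density" by (rule phi_set_integrable) auto
    fix z assume "z \<in> {y<..}"
    have "0 \<le> 3/z^4 * std_normal_density z" by simp
    then show "f z \<le> std_normal_density z" unfolding f_def
      by (simp add: algebra_simps)
  qed
  then show ?thesis using E Qf_integral by simp
qed


lemma real_distribution_std: "real_distribution (density lborel std_normal_density)"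
proof -
  interpret P: prob_space "density lborel std_normal_density" by (rule prob_std)
  show ?thesis by unfold_locales simp
qed

lemma Phi_cdf: "Phi = cdf (density lborel std_normal_density)"
  by (auto simp: Phi_def cdf_def fun_eq_iff)

lemma Phi_cont: "isCont Phi x"
proof -
  interpret R: real_distribution "density lborel std_normal_density" by (rule real_distribution_std)
  have "{x} \<in> null_sets lborel" by (rule finite_imp_null_set_lborel) simp
  then have "AE z in lborel. z \<notin> {x}" by (rule AE_not_in)
  then have "AE z in lborel. z \<in> {x} \<longrightarrow> std_normal_density z = 0"
    by eventually_elim auto
  then have "{x} \<in> null_sets (density lborel std_normal_density)"
    by (subst null_sets_density_iff) auto
  then have "measure (density lborel std_normal_density) {x} = 0"
    by (auto simp: measure_def dest: null_setsD1)
  then show ?thesis unfolding Phi_cdf by (simp add: R.isCont_cdf)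
qed

lemma Phi_strict: assumes "x < y" shows "Phi x < Phi y"
proof (rule ccontr)
  interpret R: real_distribution "density lborel std_normal_density" by (rule real_distribution_std)
  assume "\<not> Phi x < Phi y"
  moreover have "Phi x \<le> Phi y" unfolding Phi_cdf using assms by (intro R.cdf_nondecreasing) simp
  ultimately have "Phi y - Phi x = 0" by simp
  then have m0: "measure (density lborel std_normal_density) {x<..y} = 0"
    unfolding Phi_cdf using R.cdf_diff_eq[OF assms] by simp
  then have "emeasure (density lborel std_normal_density) {x<..y} = 0"
    by (simp add: R.emeasure_eq_measure)
  then have "{x<..y} \<in> null_sets (density lborel std_normal_density)" by auto
  then have "AE z in lborel. z \<in> {x<..y} \<longrightarrow> std_normal_density z = 0"
    by (subst (asm) null_sets_density_iff) auto
  moreover have "\<And>z. std_normal_density z \<noteq> 0" using normal_density_pos[of 1 0] by (metis less_irrefl zero_less_one)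
  ultimately have "AE z in lborel. z \<notin> {x<..y}" by simp
  then have "{x<..y} \<in> null_sets lborel" by (subst AE_iff_null_sets) auto
  then have "emeasure lborel {x<..y} = 0" by auto
  then show False using assms by simp
qed

lemma Phi_le1: "Phi x \<le> 1"
proof -
  interpret R: real_distribution "density lborel std_normal_density" by (rule real_distribution_std)
  show ?thesis unfolding Phi_cdf by (rule R.cdf_bounded_prob)
qed

lemma Phi_lt1: "Phi x < 1"
  using Phi_strict[of x "x+1"] Phi_le1[of "x+1"] by simp

lemma Phi_top: "(Phi \<longlongrightarrow> 1) at_top"
proof -
  interpret R: real_distribution "density lborel std_normal_density" by (rule real_distribution_std)
  show ?thesis unfolding Phi_cdf by (rule R.cdf_lim_at_top_prob)
qed

lemma Phi_inv_eq:
  assumes "Phi 0 \<le> p" "p < 1"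
  shows "Phi (Phi_inv p) = p"
proof -
  from Phi_top assms(2) have "eventually (\<lambda>x. p < Phi x) at_top"
    by (rule order_tendstoD)
  then obtain X where X: "\<And>x. x \<ge> X \<Longrightarrow> p < Phi x" by (auto simp: eventually_at_top_linorder)
  define X' where "X' = max X 0"
  have "p \<le> Phi X'" using X[of X'] by (simp add: X'_def)
  moreover have "continuous_on {0..X'} Phi" using Phi_cont by (intro continuous_at_imp_continuous_on) auto
  ultimately obtain x where "Phi x = p" using IVT'[of Phi 0 p X'] assms(1) by (auto simp: X'_def)
  moreover have "\<And>z. Phi z = p \<Longrightarrow> z = x"
    using Phi_strict \<open>Phi x = p\<close> by (metis linorder_neqE_linordered_idom less_irrefl)
  ultimately have "\<exists>!x. Phi x = p" by blast
  then show ?thesis unfolding Phi_inv_def by (rule theI')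
qed

lemma Phi_inv_at_top: "filterlim Phi_inv at_top (at_left 1)"
proof (subst filterlim_at_top, intro allI)
  fix M :: real
  have "Phi (max M 0) < 1" by (rule Phi_lt1)
  then have "eventually (\<lambda>p. Phi (max M 0) < p) (at_left (1::real))"
    by (intro eventually_at_leftI[of "Phi (max M 0)"]) auto
  moreover have "eventually (\<lambda>p. p < (1::real)) (at_left 1)"
    by (simp add: eventually_at_filter)
  ultimately show "eventually (\<lambda>p. M \<le> Phi_inv p) (at_left 1)"
  proof eventually_elim
    case (elim p)
    have "Phi 0 \<le> Phi (max M 0)" by (metis Phi_strict max.cobounded2 order_le_less)
    then have e: "Phi (Phi_inv p) = p" using elim by (intro Phi_inv_eq) auto
    show "M \<le> Phi_inv p"
    proof (rule ccontr)
      assume "\<not> M \<le> Phi_inv p"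
      then have "Phi_inv p < max M 0" by simp
      then have "Phi (Phi_inv p) < Phi (max M 0)" by (rule Phi_strict)
      then show False using e elim by simp
    qed
  qed
qed


lemma nd_affine: "0 < \<sigma> \<Longrightarrow> normal_density \<mu> \<sigma> (\<mu> + \<sigma> * z) = std_normal_density z / \<sigma>"
  unfolding normal_density_def
  by (simp add: real_sqrt_mult power_mult_distrib field_simps)

lemma M0_change:
  fixes g :: "real \<Rightarrow> real"
  assumes s: "0 < \<sigma>" and g[measurable]: "g \<in> borel_measurable borel"
  shows "integral\<^sup>L (density lborel (normal_density \<mu> \<sigma>)) g
     = (\<integral>z. std_normal_density z * g (\<mu> + \<sigma> * z) \<partial>lborel)"
proof -
  have "integral\<^sup>L (density lborel (normal_density \<mu> \<sigma>)) g = (\<integral>x. normal_density \<mu> \<sigma> x * g x \<partial>lborel)"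
    by (subst integral_real_density) auto
  also have "\<dots> = \<bar>\<sigma>\<bar> *\<^sub>R (\<integral>z. normal_density \<mu> \<sigma> (\<mu> + \<sigma> * z) * g (\<mu> + \<sigma> * z) \<partial>lborel)"
    using s by (intro lborel_integral_real_affine) simp
  also have "\<dots> = (\<integral>z. std_normal_density z * g (\<mu> + \<sigma> * z) \<partial>lborel)"
    using s by (simp add: nd_affine)
  finally show ?thesis .
qed

lemma M0_integrable:
  fixes g :: "real \<Rightarrow> real"
  assumes s: "0 < \<sigma>" and g[measurable]: "g \<in> borel_measurable borel"
    and b: "\<And>x. \<bar>g x\<bar> \<le> a + b * \<bar>x\<bar>"
  shows "integrable (density lborel (normal_density \<mu> \<sigma>)) g"
proof -
  interpret P: prob_space "density lborel (normal_density \<mu> \<sigma>)" using s by (rule prob_space_normal_density)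
  have "integrable (density lborel (normal_density \<mu> \<sigma>)) (\<lambda>x. x)"
    using integrable_normal_moment_nz_1[OF s, of \<mu>]
    by (subst integrable_real_density) (auto simp: mult.commute)
  then have i: "integrable (density lborel (normal_density \<mu> \<sigma>)) (\<lambda>x. a + b * \<bar>x\<bar>)"
    by auto
  show ?thesis
    by (rule Bochner_Integration.integrable_bound[OF i]) (auto intro!: AE_I2 order.trans[OF b abs_ge_self])
qed

lemma M0_mean:
  assumes s: "0 < \<sigma>"
  shows "integral\<^sup>L (density lborel (normal_density \<mu> \<sigma>)) (\<lambda>x. x) = \<mu>"
  using integral_normal_moment_nz_1[OF s, of \<mu>]
  by (subst integral_real_density) (auto simp: mult.commute)

lemma std_int_lin: "(\<integral>z. std_normal_density z * (a + b * z) \<partial>lborel) = a"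
proof -
  have i1: "integrable lborel (\<lambda>z. std_normal_density z * z)"
    using integrable_std_normal_moment[of 1] by simp
  have "(\<integral>z. std_normal_density z * (a + b * z) \<partial>lborel)
     = (\<integral>z. a * std_normal_density z + b * (std_normal_density z * z) \<partial>lborel)"
    by (simp add: algebra_simps)
  also have "\<dots> = a * (\<integral>z. std_normal_density z \<partial>lborel) + b * (\<integral>z. std_normal_density z * z \<partial>lborel)"
    using i1 by (simp)
  also have "(\<integral>z. std_normal_density z * z \<partial>lborel) = 0"
    using integral_std_normal_moment_odd[of 0] by simp
  finally show ?thesis by simp
qed

lemma M0_trunc:
  assumes s: "0 < \<sigma>" and y: "0 \<le> y"
  shows "integral\<^sup>L (density lborel (normal_density \<mu> \<sigma>))
           (\<lambda>x. (x - (\<mu> + c * \<sigma>)) * indicator {\<mu> + y * \<sigma><..} x)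
       = \<sigma> * (std_normal_density y - c * Qf y)"
proof -
  have e: "std_normal_density z * ((\<mu> + \<sigma> * z - (\<mu> + c * \<sigma>)) * indicator {\<mu> + y * \<sigma><..} (\<mu> + \<sigma> * z))
      = \<sigma> * (indicator {y<..} z * (z * std_normal_density z)) - (\<sigma> * c) * (indicator {y<..} z * std_normal_density z)" for z
    using s by (auto simp: indicator_def algebra_simps)
  have i1: "integrable lborel (\<lambda>z. indicator {y<..} z * (z * std_normal_density z))"
    using G1(1)[OF y] by (simp add: set_integrable_def)
  have i2: "integrable lborel (\<lambda>z. indicator {y<..} z * std_normal_density z)"
    using phi_set_integrable[of "{y<..}"] by (simp add: set_integrable_def)
  have "integral\<^sup>L (density lborel (normal_density \<mu> \<sigma>))
           (\<lambda>x. (x - (\<mu> + c * \<sigma>)) * indicator {\<mu> + y * \<sigma><..} x)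
     = (\<integral>z. \<sigma> * (indicator {y<..} z * (z * std_normal_density z)) - (\<sigma> * c) * (indicator {y<..} z * std_normal_density z) \<partial>lborel)"
    apply (subst M0_change[OF s])
     apply simp
    apply (rule Bochner_Integration.integral_cong[OF refl])
    using s apply (auto simp: indicator_def algebra_simps mult_less_cancel_left)
    done
  also have "\<dots> = \<sigma> * (\<integral>z. indicator {y<..} z * (z * std_normal_density z) \<partial>lborel)
                 - (\<sigma> * c) * (\<integral>z. indicator {y<..} z * std_normal_density z \<partial>lborel)"
    using i1 i2 by simp
  also have "(\<integral>z. indicator {y<..} z * (z * std_normal_density z) \<partial>lborel) = std_normal_density y"
    using G1(2)[OF y] by (simp add: set_lebesgue_integral_def)
  also have "(\<integral>z. indicator {y<..} z * std_normal_density z \<partial>lborel) = Qf y"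
    using Qf_integral[of y] by (simp add: set_lebesgue_integral_def)
  finally show ?thesis by (simp add: algebra_simps)
qed

lemma M0_negpart:
  assumes s: "0 < \<sigma>"
  shows "integral\<^sup>L (density lborel (normal_density \<mu> \<sigma>)) (\<lambda>x. max ((\<mu> + c * \<sigma>) - x) 0)
       \<le> \<sigma> * (\<bar>c\<bar> + 1)"
proof -
  have i2: "integrable lborel (\<lambda>z. std_normal_density z * z^2)"
    using integrable_std_normal_moment[of 2] by simp
  have m2: "(\<integral>z. std_normal_density z * z^2 \<partial>lborel) = 1"
    using integral_std_normal_moment_even[of 1] by simp
  have b: "std_normal_density z * max ((\<mu> + c * \<sigma>) - (\<mu> + \<sigma> * z)) 0
      \<le> (\<sigma> * (\<bar>c\<bar> + 1/2)) * std_normal_density z + (\<sigma>/2) * (std_normal_density z * z^2)" for z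
  proof -
    have "max (c - z) 0 \<le> \<bar>c\<bar> + 1/2 + z^2/2"
      using sum_squares_ge_zero[of "z+1" 0] by (auto simp: power2_eq_square algebra_simps)
    then have "\<sigma> * max (c - z) 0 \<le> \<sigma> * (\<bar>c\<bar> + 1/2 + z^2/2)" using s by (intro mult_left_mono) auto
    moreover have "max ((\<mu> + c * \<sigma>) - (\<mu> + \<sigma> * z)) 0 = \<sigma> * max (c - z) 0"
      using s by (simp add: max_def algebra_simps mult_le_cancel_left)
    ultimately have "max ((\<mu> + c * \<sigma>) - (\<mu> + \<sigma> * z)) 0 \<le> \<sigma> * (\<bar>c\<bar> + 1/2 + z^2/2)" by simp
    then have "std_normal_density z * max ((\<mu> + c * \<sigma>) - (\<mu> + \<sigma> * z)) 0
        \<le> std_normal_density z * (\<sigma> * (\<bar>c\<bar> + 1/2 + z^2/2))" by (intro mult_left_mono) auto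
    then show ?thesis by (simp add: algebra_simps)
  qed
  have "integral\<^sup>L (density lborel (normal_density \<mu> \<sigma>)) (\<lambda>x. max ((\<mu> + c * \<sigma>) - x) 0)
      = (\<integral>z. std_normal_density z * max ((\<mu> + c * \<sigma>) - (\<mu> + \<sigma> * z)) 0 \<partial>lborel)"
    by (rule M0_change[OF s]) simp
  also have "\<dots> \<le> (\<integral>z. (\<sigma> * (\<bar>c\<bar> + 1/2)) * std_normal_density z + (\<sigma>/2) * (std_normal_density z * z^2) \<partial>lborel)"
  proof (rule integral_mono)
    show "integrable lborel (\<lambda>z. (\<sigma> * (\<bar>c\<bar> + 1/2)) * std_normal_density z + (\<sigma>/2) * (std_normal_density z * z^2))"
      using i2 by simp
    then show "integrable lborel (\<lambda>z. std_normal_density z * max ((\<mu> + c * \<sigma>) - (\<mu> + \<sigma> * z)) 0)"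
    proof (rule Bochner_Integration.integrable_bound)
      show "AE z in lborel. norm (std_normal_density z * max ((\<mu> + c * \<sigma>) - (\<mu> + \<sigma> * z)) 0)
         \<le> norm ((\<sigma> * (\<bar>c\<bar> + 1/2)) * std_normal_density z + (\<sigma>/2) * (std_normal_density z * z^2))"
      proof (intro AE_I2)
        fix z
        have nn: "0 \<le> std_normal_density z * max ((\<mu> + c * \<sigma>) - (\<mu> + \<sigma> * z)) 0" by simp
        show "norm (std_normal_density z * max ((\<mu> + c * \<sigma>) - (\<mu> + \<sigma> * z)) 0)
         \<le> norm ((\<sigma> * (\<bar>c\<bar> + 1/2)) * std_normal_density z + (\<sigma>/2) * (std_normal_density z * z^2))"
          unfolding real_norm_def abs_of_nonneg[OF nn] using b[of z] abs_ge_self by (rule order.trans)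
      qed
    qed simp
  qed (rule b)
  also have "\<dots> = \<sigma> * (\<bar>c\<bar> + 1/2) + \<sigma>/2"
    using i2 m2 by simp
  finally show ?thesis by (simp add: algebra_simps)
qed


abbreviation "M0 \<mu> \<sigma> \<equiv> density lborel (normal_density \<mu> \<sigma>)"
abbreviation "Nw \<equiv> (\<Pi>\<^sub>M i\<in>(UNIV::nat set). density lborel std_normal_density)"

lemma prob_Nw: "prob_space Nw"
  by (rule prob_space_PiM) (rule prob_std)

lemma prob_M0: "0 < \<sigma> \<Longrightarrow> prob_space (M0 \<mu> \<sigma>)"
  by (rule prob_space_normal_density)

lemma pair_M0_Nw: "0 < \<sigma> \<Longrightarrow> pair_prob_space (M0 \<mu> \<sigma>) Nw"
proof -
  assume s: "0 < \<sigma>"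
  interpret A: prob_space "M0 \<mu> \<sigma>" using s by (rule prob_M0)
  interpret B: prob_space Nw by (rule prob_Nw)
  show ?thesis by unfold_locales
qed

lemma prob_bandit: "0 < \<sigma> \<Longrightarrow> prob_space (bandit_space \<mu> \<sigma>)"
proof -
  assume s: "0 < \<sigma>"
  interpret P: pair_prob_space "M0 \<mu> \<sigma>" Nw using s by (rule pair_M0_Nw)
  show ?thesis unfolding bandit_space_def by (rule P.prob_space_axioms)
qed

lemma bandit_fst:
  fixes h :: "real \<Rightarrow> real"
  assumes s: "0 < \<sigma>" and h[measurable]: "h \<in> borel_measurable borel"
  shows "(\<integral>\<omega>. h (fst \<omega>) \<partial>bandit_space \<mu> \<sigma>) = integral\<^sup>L (M0 \<mu> \<sigma>) h"
    and "integrable (M0 \<mu> \<sigma>) h \<Longrightarrow> integrable (bandit_space \<mu> \<sigma>) (\<lambda>\<omega>. h (fst \<omega>))"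
proof -
  interpret B: prob_space Nw by (rule prob_Nw)
  have d: "distr (bandit_space \<mu> \<sigma>) (M0 \<mu> \<sigma>) fst = M0 \<mu> \<sigma>"
    unfolding bandit_space_def by (rule B.distr_pair_fst)
  have m: "fst \<in> measurable (bandit_space \<mu> \<sigma>) (M0 \<mu> \<sigma>)"
    unfolding bandit_space_def by simp
  show "(\<integral>\<omega>. h (fst \<omega>) \<partial>bandit_space \<mu> \<sigma>) = integral\<^sup>L (M0 \<mu> \<sigma>) h"
    using integral_distr[OF m, of h] d by simp
  show "integrable (M0 \<mu> \<sigma>) h \<Longrightarrow> integrable (bandit_space \<mu> \<sigma>) (\<lambda>\<omega>. h (fst \<omega>))"
    using integrable_distr_eq[OF m, of h] d by simp
qed

lemma bandit_prod:
  fixes h :: "real \<Rightarrow> real"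
  assumes s: "0 < \<sigma>" and h[measurable]: "h \<in> borel_measurable borel"
    and hi: "integrable (M0 \<mu> \<sigma>) h" and B[measurable]: "B \<in> sets Nw"
  shows "integrable (bandit_space \<mu> \<sigma>) (\<lambda>\<omega>. h (fst \<omega>) * indicator B (snd \<omega>))"
    and "(\<integral>\<omega>. h (fst \<omega>) * indicator B (snd \<omega>) \<partial>bandit_space \<mu> \<sigma>) = integral\<^sup>L (M0 \<mu> \<sigma>) h * measure Nw B"
proof -
  interpret P: pair_prob_space "M0 \<mu> \<sigma>" Nw using s by (rule pair_M0_Nw)
  have i1: "integrable (bandit_space \<mu> \<sigma>) (\<lambda>\<omega>. h (fst \<omega>))"
    using bandit_fst(2)[OF s h hi] .
  have e: "(\<lambda>\<omega>. h (fst \<omega>) * indicator B (snd \<omega>)) = (\<lambda>\<omega>. indicator (space (M0 \<mu> \<sigma>) \<times> B) \<omega> *\<^sub>R h (fst \<omega>))"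
    by (auto simp: indicator_def fun_eq_iff)
  have sB: "space (M0 \<mu> \<sigma>) \<times> B \<in> sets (bandit_space \<mu> \<sigma>)"
    unfolding bandit_space_def by simp
  show i: "integrable (bandit_space \<mu> \<sigma>) (\<lambda>\<omega>. h (fst \<omega>) * indicator B (snd \<omega>))"
    unfolding e by (rule integrable_mult_indicator[OF sB i1])
  have "(\<integral>\<omega>. h (fst \<omega>) * indicator B (snd \<omega>) \<partial>bandit_space \<mu> \<sigma>)
      = (\<integral>x. (\<integral>y. h x * indicator B y \<partial>Nw) \<partial>M0 \<mu> \<sigma>)"
    using P.integral_fst'[of "\<lambda>\<omega>. h (fst \<omega>) * indicator B (snd \<omega>)"] i
    unfolding bandit_space_def by simp
  also have "\<dots> = (\<integral>x. h x * measure Nw B \<partial>M0 \<mu> \<sigma>)"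
    by simp
  also have "\<dots> = integral\<^sup>L (M0 \<mu> \<sigma>) h * measure Nw B" by simp
  finally show "(\<integral>\<omega>. h (fst \<omega>) * indicator B (snd \<omega>) \<partial>bandit_space \<mu> \<sigma>) = integral\<^sup>L (M0 \<mu> \<sigma>) h * measure Nw B" .
qed


definition Gs :: "real \<Rightarrow> enat \<Rightarrow> real" where
  "Gs \<gamma> e = (\<Sum>t. if enat t \<le> e then \<gamma>^t else 0)"

context
  fixes \<gamma> :: real assumes g0: "0 < \<gamma>" and g1: "\<gamma> < 1"
begin

lemma Gs_summable: "summable (\<lambda>t. if enat t \<le> e then \<gamma>^t else 0)"
  by (rule summable_comparison_test[OF _ summable_geometric[of \<gamma>]]) (use g0 g1 in auto)

lemma Gs_le: "Gs \<gamma> e \<le> 1 / (1 - \<gamma>)"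
proof -
  have "Gs \<gamma> e \<le> (\<Sum>t. \<gamma>^t)" unfolding Gs_def
    by (rule suminf_le[OF _ Gs_summable summable_geometric]) (use g0 g1 in auto)
  also have "\<dots> = 1 / (1 - \<gamma>)" using suminf_geometric[of \<gamma>] g0 g1 by simp
  finally show ?thesis .
qed

lemma Gs_ge: assumes "1 \<le> e" shows "1 + \<gamma> \<le> Gs \<gamma> e"
proof -
  have "sum (\<lambda>t. if enat t \<le> e then \<gamma>^t else 0) {0,1} \<le> Gs \<gamma> e" unfolding Gs_def
    by (rule sum_le_suminf[OF Gs_summable]) (use g0 in auto)
  moreover have "sum (\<lambda>t. if enat t \<le> e then \<gamma>^t else 0) {0,1} = 1 + \<gamma>"
  proof -
    have a: "enat (Suc 0) \<le> e" using assms by (simp add: one_enat_def)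
    have b: "enat 0 \<le> e" by (simp add: zero_enat_def[symmetric])
    show ?thesis using a b by simp
  qed
  ultimately show ?thesis by simp
qed

lemma Gs_nonneg: "0 \<le> Gs \<gamma> e"
  unfolding Gs_def by (rule suminf_nonneg[OF Gs_summable]) (use g0 in auto)

lemma Gs_inf: "Gs \<gamma> \<infinity> = 1 / (1 - \<gamma>)"
  unfolding Gs_def using suminf_geometric[of \<gamma>] g0 g1 by simp

lemma Gs_fin: "Gs \<gamma> (enat n) = (1 - \<gamma>^Suc n) / (1 - \<gamma>)"
proof -
  have "Gs \<gamma> (enat n) = sum (\<lambda>t. if enat t \<le> enat n then \<gamma>^t else 0) {..<Suc n}"
    unfolding Gs_def by (rule suminf_finite) auto
  also have "\<dots> = (\<Sum>t<Suc n. \<gamma>^t)" by (intro sum.cong) auto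
  also have "\<dots> = (\<gamma>^Suc n - 1) / (\<gamma> - 1)" by (rule geometric_sum) (use g1 in auto)
  also have "\<dots> = (1 - \<gamma>^Suc n) / (1 - \<gamma>)" using g1 by (simp add: field_simps)
  finally show ?thesis .
qed

lemma Gs_mult: "(\<Sum>t. if enat t \<le> e then \<gamma>^t * x else 0) = x * Gs \<gamma> e"
proof -
  have "(\<lambda>t. if enat t \<le> e then \<gamma>^t * x else 0) = (\<lambda>t. x * (if enat t \<le> e then \<gamma>^t else 0))"
    by auto
  then show ?thesis unfolding Gs_def using suminf_mult[OF Gs_summable, of x] by simp
qed

end

lemma reward_meas[measurable]: "(\<lambda>\<omega>. reward \<sigma>W i \<omega>) \<in> borel_measurable (bandit_space \<mu> \<sigma>)"
  unfolding reward_def bandit_space_def by measurable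

lemma rvec_meas: "(\<lambda>\<omega>. \<lambda>i\<in>{i. enat i < t}. reward \<sigma>W i \<omega>)
   \<in> measurable (bandit_space \<mu> \<sigma>) (\<Pi>\<^sub>M i\<in>{i. enat i < t}. (borel :: real measure))"
  by (rule measurable_restrict) simp

lemma filt_sub: "sets (reward_filtration \<sigma>W \<mu> \<sigma> t) \<subseteq> sets (bandit_space \<mu> \<sigma>)"
  unfolding reward_filtration_def by (rule sets_image_in_sets[OF refl rvec_meas])

lemma st_le_sets:
  assumes "\<tau> \<in> admissible_stopping_times \<sigma>W \<mu> \<sigma>"
  shows "{\<omega> \<in> space (bandit_space \<mu> \<sigma>). \<tau> \<omega> \<le> t} \<in> sets (bandit_space \<mu> \<sigma>)"
proof -
  have "Measurable.pred (reward_filtration \<sigma>W \<mu> \<sigma> t) (\<lambda>x. \<tau> x \<le> t)"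
    using assms unfolding admissible_stopping_times_def stopping_time_def by auto
  then have "{\<omega> \<in> space (reward_filtration \<sigma>W \<mu> \<sigma> t). \<tau> \<omega> \<le> t} \<in> sets (reward_filtration \<sigma>W \<mu> \<sigma> t)"
    by (rule predE)
  then have "{\<omega> \<in> space (bandit_space \<mu> \<sigma>). \<tau> \<omega> \<le> t} \<in> sets (reward_filtration \<sigma>W \<mu> \<sigma> t)"
    by (simp add: reward_filtration_def)
  then show ?thesis using filt_sub[of \<sigma>W \<mu> \<sigma> t] by blast
qed

lemma st_ge_sets:
  assumes "\<tau> \<in> admissible_stopping_times \<sigma>W \<mu> \<sigma>"
  shows "{\<omega> \<in> space (bandit_space \<mu> \<sigma>). enat t \<le> \<tau> \<omega>} \<in> sets (bandit_space \<mu> \<sigma>)"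
proof (cases t)
  case 0
  then show ?thesis by (simp add: zero_enat_def[symmetric])
next
  case (Suc s)
  have "{\<omega> \<in> space (bandit_space \<mu> \<sigma>). enat t \<le> \<tau> \<omega>}
      = space (bandit_space \<mu> \<sigma>) - {\<omega> \<in> space (bandit_space \<mu> \<sigma>). \<tau> \<omega> \<le> enat s}"
    using Suc by (auto simp: Suc_ile_eq not_le)
  then show ?thesis using st_le_sets[OF assms, of "enat s"] by auto
qed

lemma integrand_facts:
  fixes \<gamma> lam :: real
  assumes g0: "0 < \<gamma>" and g1: "\<gamma> < 1" and s: "0 < \<sigma>"
    and tau: "\<tau> \<in> admissible_stopping_times \<sigma>W \<mu> \<sigma>"
  defines "f \<equiv> (\<lambda>\<omega>. (\<Sum>t. if enat t \<le> \<tau> \<omega> then \<gamma> ^ t * (quality \<omega> - lam) else 0))"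
  shows "\<And>\<omega>. f \<omega> = (fst \<omega> - lam) * Gs \<gamma> (\<tau> \<omega>)"
    and "integrable (bandit_space \<mu> \<sigma>) f"
proof -
  show eq: "f \<omega> = (fst \<omega> - lam) * Gs \<gamma> (\<tau> \<omega>)" for \<omega>
    unfolding f_def quality_def by (rule Gs_mult[OF g0 g1])
  have meas: "f \<in> borel_measurable (bandit_space \<mu> \<sigma>)"
    unfolding f_def
  proof (rule borel_measurable_suminf)
    fix t
    show "(\<lambda>\<omega>. if enat t \<le> \<tau> \<omega> then \<gamma> ^ t * (quality \<omega> - lam) else 0) \<in> borel_measurable (bandit_space \<mu> \<sigma>)"
      by (rule measurable_If[OF _ _ st_ge_sets[OF tau]]) (auto simp: quality_def bandit_space_def)
  qed
  have hi: "integrable (M0 \<mu> \<sigma>) (\<lambda>x. \<bar>x - lam\<bar> / (1 - \<gamma>))"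
  proof (rule M0_integrable[OF s, where a="\<bar>lam\<bar> / (1-\<gamma>)" and b="1/(1-\<gamma>)"])
    fix x :: real
    have "\<bar>x - lam\<bar> \<le> \<bar>lam\<bar> + \<bar>x\<bar>" by linarith
    then have "\<bar>x - lam\<bar> / (1 - \<gamma>) \<le> (\<bar>lam\<bar> + \<bar>x\<bar>) / (1 - \<gamma>)"
      using g1 by (intro divide_right_mono) auto
    then show "\<bar>\<bar>x - lam\<bar> / (1 - \<gamma>)\<bar> \<le> \<bar>lam\<bar> / (1 - \<gamma>) + 1 / (1 - \<gamma>) * \<bar>x\<bar>"
      using g1 by (simp add: add_divide_distrib)
  qed simp
  have bi: "integrable (bandit_space \<mu> \<sigma>) (\<lambda>\<omega>. \<bar>fst \<omega> - lam\<bar> / (1 - \<gamma>))"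
    using bandit_fst(2)[OF s _ hi] by simp
  show "integrable (bandit_space \<mu> \<sigma>) f"
  proof (rule Bochner_Integration.integrable_bound[OF bi meas], intro AE_I2)
    fix \<omega>
    have "\<bar>fst \<omega> - lam\<bar> * Gs \<gamma> (\<tau> \<omega>) \<le> \<bar>fst \<omega> - lam\<bar> * (1 / (1 - \<gamma>))"
      by (intro mult_left_mono Gs_le[OF g0 g1]) auto
    then show "norm (f \<omega>) \<le> norm (\<bar>fst \<omega> - lam\<bar> / (1 - \<gamma>))"
      unfolding eq using Gs_nonneg[OF g0 g1] g1 by (simp add: abs_mult)
  qed
qed


lemma payoff_upper:
  fixes \<gamma> lam :: real
  assumes g0: "0 < \<gamma>" and g1: "\<gamma> < 1" and s: "0 < \<sigma>"
    and tau: "\<tau> \<in> admissible_stopping_times \<sigma>W \<mu> \<sigma>"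
  shows "stop_payoff \<sigma>W \<mu> \<sigma> \<gamma> lam \<tau> \<le> (\<mu> - lam) * (1 + \<gamma>)
     + \<gamma>^2 / (1 - \<gamma>) * integral\<^sup>L (M0 \<mu> \<sigma>) (\<lambda>x. max (x - lam) 0)"
proof -
  define h where "h = (\<lambda>x::real. (x - lam) * (1 + \<gamma>) + \<gamma>^2 / (1 - \<gamma>) * max (x - lam) 0)"
  have hm[measurable]: "h \<in> borel_measurable borel" unfolding h_def by measurable
  have i0: "integrable (M0 \<mu> \<sigma>) (\<lambda>x. x)"
    using M0_integrable[OF s, of "\<lambda>x. x" 0 1] by simp
  have i1: "integrable (M0 \<mu> \<sigma>) (\<lambda>x. max (x - lam) 0)"
    by (rule M0_integrable[OF s, of _ "\<bar>lam\<bar>" 1]) auto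
  interpret P: prob_space "M0 \<mu> \<sigma>" using s by (rule prob_M0)
  have hi: "integrable (M0 \<mu> \<sigma>) h" unfolding h_def using i0 i1 by (auto simp: algebra_simps)
  have hint: "integral\<^sup>L (M0 \<mu> \<sigma>) h = (\<mu> - lam) * (1 + \<gamma>)
     + \<gamma>^2 / (1 - \<gamma>) * integral\<^sup>L (M0 \<mu> \<sigma>) (\<lambda>x. max (x - lam) 0)"
  proof -
    have "integral\<^sup>L (M0 \<mu> \<sigma>) h = (1 + \<gamma>) * integral\<^sup>L (M0 \<mu> \<sigma>) (\<lambda>x. x) - (1 + \<gamma>) * lam
        + \<gamma>^2 / (1 - \<gamma>) * integral\<^sup>L (M0 \<mu> \<sigma>) (\<lambda>x. max (x - lam) 0)"
      unfolding h_def using i0 i1 P.prob_space by (simp add: algebra_simps)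
    then show ?thesis using M0_mean[OF s, of \<mu>] by (simp add: algebra_simps)
  qed
  define f where "f = (\<lambda>\<omega>. (\<Sum>t. if enat t \<le> \<tau> \<omega> then \<gamma> ^ t * (quality \<omega> - lam) else 0))"
  note ff = integrand_facts[OF g0 g1 s tau, where lam=lam, folded f_def]
  have "stop_payoff \<sigma>W \<mu> \<sigma> \<gamma> lam \<tau> = integral\<^sup>L (bandit_space \<mu> \<sigma>) f"
    unfolding stop_payoff_def f_def ..
  also have "\<dots> \<le> (\<integral>\<omega>. h (fst \<omega>) \<partial>bandit_space \<mu> \<sigma>)"
  proof (rule integral_mono[OF ff(2) bandit_fst(2)[OF s hm hi]])
    fix \<omega> assume \<omega>: "\<omega> \<in> space (bandit_space \<mu> \<sigma>)"
    have t1: "1 \<le> \<tau> \<omega>" using tau \<omega> unfolding admissible_stopping_times_def by auto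
    have G1: "1 + \<gamma> \<le> Gs \<gamma> (\<tau> \<omega>)" by (rule Gs_ge[OF g0 g1 t1])
    have G2: "Gs \<gamma> (\<tau> \<omega>) \<le> 1 / (1 - \<gamma>)" by (rule Gs_le[OF g0 g1])
    have id: "1 / (1 - \<gamma>) = (1 + \<gamma>) + \<gamma>^2 / (1 - \<gamma>)"
      using g1 by (simp add: field_simps power2_eq_square)
    show "f \<omega> \<le> h (fst \<omega>)"
    proof (cases "0 \<le> fst \<omega> - lam")
      case True
      then have "(fst \<omega> - lam) * Gs \<gamma> (\<tau> \<omega>) \<le> (fst \<omega> - lam) * (1 / (1 - \<gamma>))"
        using G2 by (intro mult_left_mono) auto
      also have "\<dots> = h (fst \<omega>)" unfolding h_def id using True by (simp add: algebra_simps)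
      finally show ?thesis using ff(1)[of \<omega>] by (simp add: f_def)
    next
      case False
      then have "(fst \<omega> - lam) * Gs \<gamma> (\<tau> \<omega>) \<le> (fst \<omega> - lam) * (1 + \<gamma>)"
        using G1 by (intro mult_left_mono_neg) auto
      also have "\<dots> = h (fst \<omega>)" unfolding h_def using False by simp
      finally show ?thesis using ff(1)[of \<omega>] by (simp add: f_def)
    qed
  qed
  also have "\<dots> = integral\<^sup>L (M0 \<mu> \<sigma>) h" by (rule bandit_fst(1)[OF s hm])
  finally show ?thesis using hint by simp
qed

lemma const_admissible: "(\<lambda>_. 1) \<in> admissible_stopping_times \<sigma>W \<mu> \<sigma>"
  unfolding admissible_stopping_times_def by (auto intro: stopping_time_const)

lemma value_facts:
  fixes \<gamma> lam \<mu> \<sigma> \<sigma>W :: real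
  assumes g0: "0 < \<gamma>" and g1: "\<gamma> < 1" and s: "0 < \<sigma>"
  defines "U \<equiv> (\<mu> - lam) * (1 + \<gamma>) + \<gamma>^2 / (1 - \<gamma>) * integral\<^sup>L (M0 \<mu> \<sigma>) (\<lambda>x. max (x - lam) 0)"
  shows "value_fun \<sigma>W \<gamma> lam \<mu> \<sigma> \<le> U"
    and "\<tau> \<in> admissible_stopping_times \<sigma>W \<mu> \<sigma> \<Longrightarrow> stop_payoff \<sigma>W \<mu> \<sigma> \<gamma> lam \<tau> \<le> value_fun \<sigma>W \<gamma> lam \<mu> \<sigma>"
proof -
  have ne: "admissible_stopping_times \<sigma>W \<mu> \<sigma> \<noteq> {}" using const_admissible by blast
  have ub: "\<And>\<tau>. \<tau> \<in> admissible_stopping_times \<sigma>W \<mu> \<sigma> \<Longrightarrow> stop_payoff \<sigma>W \<mu> \<sigma> \<gamma> lam \<tau> \<le> U"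
    unfolding U_def by (rule payoff_upper[OF g0 g1 s])
  show "value_fun \<sigma>W \<gamma> lam \<mu> \<sigma> \<le> U"
    unfolding value_fun_def by (rule cSUP_least[OF ne ub])
  have bdd: "bdd_above ((\<lambda>\<tau>. stop_payoff \<sigma>W \<mu> \<sigma> \<gamma> lam \<tau>) ` admissible_stopping_times \<sigma>W \<mu> \<sigma>)"
    using ub by (intro bdd_aboveI2) 
  show "\<tau> \<in> admissible_stopping_times \<sigma>W \<mu> \<sigma> \<Longrightarrow> stop_payoff \<sigma>W \<mu> \<sigma> \<gamma> lam \<tau> \<le> value_fun \<sigma>W \<gamma> lam \<mu> \<sigma>"
    unfolding value_fun_def by (rule cSUP_upper[OF _ bdd])
qed

lemma phi_mono: "0 \<le> a \<Longrightarrow> a \<le> b \<Longrightarrow> std_normal_density b \<le> std_normal_density a"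
proof -
  assume "0 \<le> a" "a \<le> b"
  then have "a^2 \<le> b^2" by (intro power_mono) auto
  then show ?thesis unfolding std_normal_density_def by (auto intro!: divide_right_mono)
qed

lemma max_ind: "max ((x::real) - (\<mu> + c * \<sigma>)) 0 = (x - (\<mu> + c * \<sigma>)) * indicator {\<mu> + c * \<sigma><..} x"
  by (auto simp: indicator_def max_def)

lemma U_neg:
  fixes \<gamma> :: real
  assumes g0: "0 < \<gamma>" and g1: "\<gamma> < 1" and s: "0 < \<sigma>"
    and c0: "2 \<le> c0" and Pc0: "Phi c0 = \<gamma>" and c: "c0 \<le> c"
  shows "(\<mu> - (\<mu> + c * \<sigma>)) * (1 + \<gamma>) + \<gamma>^2 / (1 - \<gamma>) * integral\<^sup>L (M0 \<mu> \<sigma>) (\<lambda>x. max (x - (\<mu> + c * \<sigma>)) 0) < 0"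
proof -
  have I: "integral\<^sup>L (M0 \<mu> \<sigma>) (\<lambda>x. max (x - (\<mu> + c * \<sigma>)) 0) = \<sigma> * (std_normal_density c - c * Qf c)"
    unfolding max_ind using M0_trunc[OF s, of c \<mu> c] c c0 by simp
  define X where "X = std_normal_density c - c * Qf c"
  have X0: "0 \<le> X" unfolding X_def using Qf_upper[of c] c c0 by (simp add: field_simps)
  have "c * ((1/c - 1/c^3) * std_normal_density c) \<le> c * Qf c"
    using Qf_lower[of c] c c0 by (intro mult_left_mono) auto
  moreover have "c * ((1/c - 1/c^3) * std_normal_density c) = std_normal_density c - std_normal_density c / c^2"
    using c c0 by (simp add: field_simps power2_eq_square power3_eq_cube)
  ultimately have "X \<le> std_normal_density c / c^2" unfolding X_def by linarith
  also have "\<dots> \<le> std_normal_density c0 / 4"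
  proof -
    have "4 \<le> c^2" using c c0 power_mono[of 2 c 2] by simp
    then have "std_normal_density c / c^2 \<le> std_normal_density c / 4"
      by (intro divide_left_mono) auto
    also have "\<dots> \<le> std_normal_density c0 / 4" using phi_mono[of c0 c] c c0 by simp
    finally show ?thesis .
  qed
  finally have Xb: "X \<le> std_normal_density c0 / 4" .
  have q: "1 - \<gamma> = Qf c0" using Phi_Qf[of c0] Pc0 by simp
  have "(1/c0 - 1/c0^3) * std_normal_density c0 \<le> Qf c0" by (rule Qf_lower[OF c0])
  moreover have "(3/4) * std_normal_density c0 / c0 \<le> (1/c0 - 1/c0^3) * std_normal_density c0"
  proof -
    have "4 \<le> c0^2" using c0 power_mono[of 2 c0 2] by simp
    then have "3/4 / c0 \<le> 1/c0 - 1/c0^3" using c0 by (simp add: field_simps power2_eq_square power3_eq_cube)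
    then show ?thesis by (metis mult.commute mult_right_mono normal_density_nonneg times_divide_eq_left times_divide_eq_right)
  qed
  ultimately have qb: "(3/4) * std_normal_density c0 / c0 \<le> 1 - \<gamma>" using q by simp
  have p0: "0 < std_normal_density c0" using normal_density_pos[of 1 0 c0] by simp
  have "\<gamma>^2 / (1 - \<gamma>) * (\<sigma> * X) \<le> 1 / (1 - \<gamma>) * (\<sigma> * X)"
    using g0 g1 X0 s by (intro mult_right_mono divide_right_mono) (auto simp: power_le_one)
  also have "\<dots> = \<sigma> * (X / (1 - \<gamma>))" by simp
  also have "X / (1 - \<gamma>) \<le> (std_normal_density c0 / 4) / ((3/4) * std_normal_density c0 / c0)"
    using Xb qb X0 p0 c0 by (intro frac_le) auto
  also have "\<dots> = c0 / 3" using p0 by (simp add: field_simps)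
  finally have "\<gamma>^2 / (1 - \<gamma>) * (\<sigma> * X) \<le> \<sigma> * (c0 / 3)" using s by (simp add: mult_left_mono)
  moreover have "(\<mu> - (\<mu> + c * \<sigma>)) * (1 + \<gamma>) \<le> - (c * \<sigma>)"
    using g0 c c0 s by (simp add: algebra_simps)
  moreover have "\<sigma> * (c0 / 3) < c * \<sigma>" using s c c0 by (simp add: field_simps)
  ultimately show ?thesis unfolding I X_def[symmetric] by linarith
qed


lemma pps_Nw: "product_prob_space (\<lambda>_::nat. density lborel std_normal_density)"
proof -
  interpret D: prob_space "density lborel std_normal_density" by (rule prob_std)
  show ?thesis by unfold_locales
qed

lemma comp_distr: "distr Nw lborel (\<lambda>w. w i) = density lborel std_normal_density"
proof -
  have "distr Nw lborel (\<lambda>w. w i) = distr Nw (density lborel std_normal_density) (\<lambda>w. w i)"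
    by (rule distr_cong) auto
  also have "\<dots> = density lborel std_normal_density"
    by (rule distr_PiM_component) (auto intro: prob_std)
  finally show ?thesis .
qed

lemma comp_distributed: "distributed Nw lborel (\<lambda>w. w i) (normal_density 0 1)"
  unfolding distributed_def using comp_distr by auto

lemma comp_indep: "prob_space.indep_vars Nw (\<lambda>_. borel) (\<lambda>i w. w i) {..<n}"
  if "0 < n"
proof -
  interpret P: product_prob_space "\<lambda>_::nat. density lborel std_normal_density" UNIV by (rule pps_Nw)
  have "distr Nw (\<Pi>\<^sub>M i\<in>{..<n}. borel) (\<lambda>x. \<lambda>i\<in>{..<n}. x i)
      = distr Nw (\<Pi>\<^sub>M i\<in>{..<n}. density lborel std_normal_density) (\<lambda>x. restrict x {..<n})"
    by (rule distr_cong) (auto intro!: sets_PiM_cong)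
  also have "\<dots> = (\<Pi>\<^sub>M i\<in>{..<n}. density lborel std_normal_density)"
    by (rule P.distr_PiM_restrict_finite) auto
  also have "\<dots> = (\<Pi>\<^sub>M i\<in>{..<n}. distr Nw borel (\<lambda>w. w i))"
  proof (rule PiM_cong[OF refl])
    fix i
    have "distr Nw borel (\<lambda>w. w i) = distr Nw lborel (\<lambda>w. w i)" by (rule distr_cong) auto
    then show "density lborel std_normal_density = distr Nw borel (\<lambda>w. w i)"
      using comp_distr by simp
  qed
  finally show ?thesis
    using that by (subst P.indep_vars_iff_distr_eq_PiM') auto
qed

lemma sum_distributed:
  assumes n: "0 < n"
  shows "distributed Nw lborel (\<lambda>w. (\<Sum>i<n. w i) / sqrt n) std_normal_density"
    and "distributed Nw lborel (\<lambda>w. - ((\<Sum>i<n. w i) / sqrt n)) std_normal_density"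
proof -
  interpret P: prob_space Nw by (rule prob_Nw)
  have S: "distributed Nw lborel (\<lambda>w. \<Sum>i\<in>{..<n}. w i) (normal_density (\<Sum>i\<in>{..<n}. 0) (sqrt (\<Sum>i\<in>{..<n}. 1\<^sup>2)))"
    by (rule P.sum_indep_normal[where X="\<lambda>i w. w i"]) (use n comp_indep comp_distributed in auto)
  then have S': "distributed Nw lborel (\<lambda>w. \<Sum>i<n. w i) (normal_density 0 (sqrt n))" by simp
  have sn: "0 < sqrt (real n)" using n by simp
  have "distributed Nw lborel (\<lambda>w. 0 + (1 / sqrt n) * (\<Sum>i<n. w i)) (normal_density (0 + (1 / sqrt n) * 0) (\<bar>1 / sqrt n\<bar> * sqrt n))"
    by (rule P.normal_density_affine[OF S' sn]) (use sn in simp)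
  then show "distributed Nw lborel (\<lambda>w. (\<Sum>i<n. w i) / sqrt n) std_normal_density"
    using sn by simp
  have "distributed Nw lborel (\<lambda>w. 0 + (- 1 / sqrt n) * (\<Sum>i<n. w i)) (normal_density (0 + (- 1 / sqrt n) * 0) (\<bar>- 1 / sqrt n\<bar> * sqrt n))"
    by (rule P.normal_density_affine[OF S' sn]) (use sn in simp)
  then show "distributed Nw lborel (\<lambda>w. - ((\<Sum>i<n. w i) / sqrt n)) std_normal_density"
    using sn by simp
qed

lemma sum_tail:
  assumes n: "0 < n"
  shows "measure Nw {w \<in> space Nw. t < (\<Sum>i<n. w i) / sqrt n} = Qf t"
    and "measure Nw {w \<in> space Nw. - ((\<Sum>i<n. w i) / sqrt n) \<le> t} = Phi t"
proof -
  note D1 = sum_distributed(1)[OF n] and D2 = sum_distributed(2)[OF n]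
  have "measure Nw {w \<in> space Nw. t < (\<Sum>i<n. w i) / sqrt n}
      = measure (distr Nw lborel (\<lambda>w. (\<Sum>i<n. w i) / sqrt n)) {t<..}"
    by (subst measure_distr[OF distributed_measurable[OF D1]]) (auto intro!: arg_cong[where f="measure Nw"])
  also have "\<dots> = Qf t" unfolding distributed_distr_eq_density[OF D1] Qf_def ..
  finally show "measure Nw {w \<in> space Nw. t < (\<Sum>i<n. w i) / sqrt n} = Qf t" .
  have "measure Nw {w \<in> space Nw. - ((\<Sum>i<n. w i) / sqrt n) \<le> t}
      = measure (distr Nw lborel (\<lambda>w. - ((\<Sum>i<n. w i) / sqrt n))) {..t}"
    by (subst measure_distr[OF distributed_measurable[OF D2]]) (auto intro!: arg_cong[where f="measure Nw"])
  also have "\<dots> = Phi t" unfolding distributed_distr_eq_density[OF D2] Phi_def ..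
  finally show "measure Nw {w \<in> space Nw. - ((\<Sum>i<n. w i) / sqrt n) \<le> t} = Phi t" .
qed


definition tau_n :: "real \<Rightarrow> nat \<Rightarrow> real \<Rightarrow> real \<times> (nat \<Rightarrow> real) \<Rightarrow> enat" where
  "tau_n \<sigma>W n m \<omega> = (if m * n \<le> (\<Sum>i<n. reward \<sigma>W i \<omega>) then \<infinity> else enat n)"

lemma tau_n_admissible:
  assumes n: "0 < n"
  shows "tau_n \<sigma>W n m \<in> admissible_stopping_times \<sigma>W \<mu> \<sigma>"
  unfolding admissible_stopping_times_def
proof (intro CollectI conjI ballI)
  fix \<omega> show "1 \<le> tau_n \<sigma>W n m \<omega>" using n by (auto simp: tau_n_def one_enat_def)
next
  show "stopping_time (reward_filtration \<sigma>W \<mu> \<sigma>) (tau_n \<sigma>W n m)"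
    unfolding stopping_time_def
  proof
    fix t :: enat
    let ?F = "reward_filtration \<sigma>W \<mu> \<sigma> t"
    let ?I = "{i. enat i < t}"
    let ?r = "\<lambda>\<omega>. \<lambda>i\<in>?I. reward \<sigma>W i \<omega>"
    show "Measurable.pred ?F (\<lambda>x. tau_n \<sigma>W n m x \<le> t)"
    proof (cases "t = \<infinity>")
      case True then show ?thesis by simp
    next
      case False
      then obtain k where k: "t = enat k" by auto
      show ?thesis
      proof (cases "k < n")
        case True
        then have "\<And>x. \<not> tau_n \<sigma>W n m x \<le> t" using k by (auto simp: tau_n_def)
        then show ?thesis by simp
      next
        case False
        then have sub: "{..<n} \<subseteq> ?I" using k by auto
        have rm: "?r \<in> measurable ?F (\<Pi>\<^sub>M i\<in>?I. (borel :: real measure))"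
          unfolding reward_filtration_def by (rule measurable_vimage_algebra1) (auto simp: space_PiM)
        have gm: "(\<lambda>v. \<Sum>i<n. v i) \<in> borel_measurable (\<Pi>\<^sub>M i\<in>?I. (borel :: real measure))"
          using sub by (intro borel_measurable_sum measurable_component_singleton) auto
        have "Measurable.pred ?F (\<lambda>x. \<not> m * n \<le> (\<Sum>i<n. ?r x i))"
          using measurable_compose[OF rm gm] by measurable
        moreover have "(\<lambda>x. tau_n \<sigma>W n m x \<le> t) = (\<lambda>x. \<not> m * n \<le> (\<Sum>i<n. ?r x i))"
        proof (rule ext)
          fix x
          have "(\<Sum>i<n. ?r x i) = (\<Sum>i<n. reward \<sigma>W i x)"
            using sub by (intro sum.cong) auto
          then show "(tau_n \<sigma>W n m x \<le> t) = (\<not> m * n \<le> (\<Sum>i<n. ?r x i))"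
            using k False by (auto simp: tau_n_def)
        qed
        ultimately show ?thesis by metis
      qed
    qed
  qed
qed

lemma reward_sum: "(\<Sum>i<n. reward \<sigma>W i \<omega>) = n * fst \<omega> + \<sigma>W * (\<Sum>i<n. snd \<omega> i)"
  by (simp add: reward_def sum.distrib sum_distrib_left)

lemma key_pw:
  fixes lam m d \<delta> \<theta> Z :: real
  assumes "lam = m - d" "0 < d" "0 < \<delta>"
  shows "(\<theta> - lam) * (if \<theta> > m + \<delta> then 1 else 0) * (if -\<delta> \<le> Z then 1 else 0)
           - max (lam - \<theta>) 0 * (if d < Z then 1 else 0)
         \<le> (\<theta> - lam) * (if m \<le> \<theta> + Z then 1 else 0)"
  using assms by (auto simp: max_def split: if_splits)

lemma payoff_lower:
  fixes \<gamma> lam m \<delta> d \<sigma>W \<mu> \<sigma> :: real and n :: nat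
  assumes g0: "0 < \<gamma>" and g1: "\<gamma> < 1" and s: "0 < \<sigma>" and sw: "0 < \<sigma>W" and n: "0 < n"
    and \<delta>: "0 < \<delta>" and d: "0 < d" and lam: "lam = m - d"
  defines "A1 \<equiv> {w \<in> space Nw. -\<delta> \<le> \<sigma>W * (\<Sum>i<n. w i) / n}"
      and "A2 \<equiv> {w \<in> space Nw. d < \<sigma>W * (\<Sum>i<n. w i) / n}"
      and "A \<equiv> (1 - \<gamma>^Suc n) / (1 - \<gamma>)" and "B \<equiv> \<gamma>^Suc n / (1 - \<gamma>)"
  shows "(\<mu> - lam) * A + B * (integral\<^sup>L (M0 \<mu> \<sigma>) (\<lambda>x. (x - lam) * indicator {m + \<delta><..} x) * measure Nw A1
            - integral\<^sup>L (M0 \<mu> \<sigma>) (\<lambda>x. max (lam - x) 0) * measure Nw A2)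
     \<le> stop_payoff \<sigma>W \<mu> \<sigma> \<gamma> lam (tau_n \<sigma>W n m)"
proof -
  note tau = tau_n_admissible[OF n, of \<sigma>W m \<mu> \<sigma>]
  define f where "f = (\<lambda>\<omega>. (\<Sum>t. if enat t \<le> tau_n \<sigma>W n m \<omega> then \<gamma> ^ t * (quality \<omega> - lam) else 0))"
  note ff = integrand_facts[OF g0 g1 s tau, where lam=lam]
  define h1 where "h1 = (\<lambda>x::real. (x - lam) * indicator {m + \<delta><..} x)"
  define h2 where "h2 = (\<lambda>x::real. max (lam - x) 0)"
  have h1m[measurable]: "h1 \<in> borel_measurable borel" unfolding h1_def by measurable
  have h2m[measurable]: "h2 \<in> borel_measurable borel" unfolding h2_def by measurable
  have h1i: "integrable (M0 \<mu> \<sigma>) h1"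
    by (rule M0_integrable[OF s h1m, of "\<bar>lam\<bar>" 1]) (auto simp: h1_def indicator_def)
  have h2i: "integrable (M0 \<mu> \<sigma>) h2"
    by (rule M0_integrable[OF s h2m, of "\<bar>lam\<bar>" 1]) (auto simp: h2_def max_def)
  have lini: "integrable (M0 \<mu> \<sigma>) (\<lambda>x. x - lam)"
    by (rule M0_integrable[OF s, of _ "\<bar>lam\<bar>" 1]) auto
  have A1m[measurable]: "A1 \<in> sets Nw" unfolding A1_def by measurable
  have A2m[measurable]: "A2 \<in> sets Nw" unfolding A2_def by measurable
  note P1 = bandit_prod[OF s h1m h1i A1m] and P2 = bandit_prod[OF s h2m h2i A2m]
  have lm: "(\<lambda>x::real. x - lam) \<in> borel_measurable borel" by simp
  note L = bandit_fst(1)[OF s lm] bandit_fst(2)[OF s lm lini]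
  define g where "g = (\<lambda>\<omega>. (fst \<omega> - lam) * A + B * (h1 (fst \<omega>) * indicator A1 (snd \<omega>) - h2 (fst \<omega>) * indicator A2 (snd \<omega>)))"
  have gi: "integrable (bandit_space \<mu> \<sigma>) g"
    unfolding g_def using P1(1) P2(1) L(2) by auto
  have gint: "integral\<^sup>L (bandit_space \<mu> \<sigma>) g = (\<mu> - lam) * A + B * (integral\<^sup>L (M0 \<mu> \<sigma>) h1 * measure Nw A1
            - integral\<^sup>L (M0 \<mu> \<sigma>) h2 * measure Nw A2)"
  proof -
    interpret P: prob_space "M0 \<mu> \<sigma>" using s by (rule prob_M0)
    have m: "integral\<^sup>L (M0 \<mu> \<sigma>) (\<lambda>x. x - lam) = \<mu> - lam"
      using M0_mean[OF s, of \<mu>] M0_integrable[OF s, of "\<lambda>x. x" 0 1] P.prob_space by simp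
    let ?X1 = "\<lambda>\<omega>. h1 (fst \<omega>) * indicator A1 (snd \<omega>)"
    let ?X2 = "\<lambda>\<omega>. h2 (fst \<omega>) * indicator A2 (snd \<omega>)"
    have "integral\<^sup>L (bandit_space \<mu> \<sigma>) g
        = (\<integral>\<omega>. (fst \<omega> - lam) * A \<partial>bandit_space \<mu> \<sigma>) + (\<integral>\<omega>. B * (?X1 \<omega> - ?X2 \<omega>) \<partial>bandit_space \<mu> \<sigma>)"
      unfolding g_def by (rule Bochner_Integration.integral_add) (use P1(1) P2(1) L(2) in auto)
    also have "(\<integral>\<omega>. (fst \<omega> - lam) * A \<partial>bandit_space \<mu> \<sigma>) = (\<integral>\<omega>. (fst \<omega> - lam) \<partial>bandit_space \<mu> \<sigma>) * A"
      by (rule integral_mult_left_zero)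
    also have "(\<integral>\<omega>. B * (?X1 \<omega> - ?X2 \<omega>) \<partial>bandit_space \<mu> \<sigma>) = B * (\<integral>\<omega>. (?X1 \<omega> - ?X2 \<omega>) \<partial>bandit_space \<mu> \<sigma>)"
      by (rule integral_mult_right_zero)
    also have "(\<integral>\<omega>. (?X1 \<omega> - ?X2 \<omega>) \<partial>bandit_space \<mu> \<sigma>) = integral\<^sup>L (bandit_space \<mu> \<sigma>) ?X1 - integral\<^sup>L (bandit_space \<mu> \<sigma>) ?X2"
      by (rule Bochner_Integration.integral_diff[OF P1(1) P2(1)])
    finally show ?thesis using P1(2) P2(2) L(1) m by (simp add: algebra_simps)
  qed
  have "integral\<^sup>L (bandit_space \<mu> \<sigma>) g \<le> integral\<^sup>L (bandit_space \<mu> \<sigma>) f"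
  proof (rule integral_mono[OF gi ff(2)[folded f_def]])
    fix \<omega> assume \<omega>: "\<omega> \<in> space (bandit_space \<mu> \<sigma>)"
    then have w: "snd \<omega> \<in> space Nw" by (auto simp: bandit_space_def space_pair_measure)
    define Z where "Z = \<sigma>W * (\<Sum>i<n. snd \<omega> i) / n"
    have Seq: "(m * n \<le> (\<Sum>i<n. reward \<sigma>W i \<omega>)) = (m \<le> fst \<omega> + Z)"
      unfolding reward_sum Z_def using n by (simp add: field_simps)
    have AB: "1 / (1 - \<gamma>) = A + B" unfolding A_def B_def using g1 by (simp add: field_simps)
    have Gt: "Gs \<gamma> (tau_n \<sigma>W n m \<omega>) = A + B * (if m \<le> fst \<omega> + Z then 1 else 0)"
      unfolding tau_n_def Seq using Gs_inf[OF g0 g1] Gs_fin[OF g0 g1, of n] AB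
      by (simp add: A_def)
    have fe: "f \<omega> = (fst \<omega> - lam) * A + B * ((fst \<omega> - lam) * (if m \<le> fst \<omega> + Z then 1 else 0))"
      unfolding f_def ff(1) Gt by (simp add: algebra_simps)
    have ge: "g \<omega> = (fst \<omega> - lam) * A + B * ((fst \<omega> - lam) * (if fst \<omega> > m + \<delta> then 1 else 0) * (if -\<delta> \<le> Z then 1 else 0)
           - max (lam - fst \<omega>) 0 * (if d < Z then 1 else 0))"
      unfolding g_def h1_def h2_def A1_def A2_def Z_def using w by (simp add: indicator_def)
    have B0: "0 \<le> B" unfolding B_def using g0 g1 by simp
    show "g \<omega> \<le> f \<omega>" unfolding fe ge
      using mult_left_mono[OF key_pw[OF lam d \<delta>, of "fst \<omega>" Z] B0] by simp
  qed
  also have "\<dots> = stop_payoff \<sigma>W \<mu> \<sigma> \<gamma> lam (tau_n \<sigma>W n m)"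
    unfolding stop_payoff_def f_def ..
  finally show ?thesis using gint unfolding h1_def h2_def by simp
qed


lemma exp_poly4: fixes x :: real assumes "0 \<le> x" shows "x^4 / 64 \<le> exp x"
proof -
  have "(x/2)^2 / 2 \<le> exp (x/2)"
    using exp_lower_Taylor_quadratic[of "x/2"] assms by (smt (verit) zero_le_power2 divide_nonneg_nonneg)
  moreover have "0 \<le> (x/2)^2 / 2" by simp
  ultimately have "((x/2)^2 / 2)^2 \<le> (exp (x/2))^2" by (rule power_mono)
  also have "(exp (x/2))^2 = exp x" by (simp add: power2_eq_square exp_add[symmetric])
  finally show ?thesis by (simp add: power_divide field_simps power2_eq_square power4_eq_xxxx)
qed

lemma phi_shift: "std_normal_density (c0 - k) = std_normal_density c0 * exp ((2*k*c0 - k^2)/2)"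
  unfolding std_normal_density_def
  by (simp add: exp_add[symmetric] power2_eq_square field_simps)

lemma phi_le_half: "std_normal_density x \<le> 1/2"
proof -
  have "exp (- x\<^sup>2 / 2) \<le> 1" by simp
  moreover have "2 \<le> sqrt (2 * pi)"
    using pi_gt3 by (simp add: real_le_rsqrt)
  then have "1 / sqrt (2 * pi) \<le> 1 / 2" by (intro divide_left_mono) auto
  then have "(1 / sqrt (2 * pi)) * exp (- x\<^sup>2 / 2) \<le> (1/2) * 1"
    using \<open>exp (- x\<^sup>2 / 2) \<le> 1\<close> by (intro mult_mono) auto
  then show ?thesis unfolding std_normal_density_def by simp
qed

lemma main_ineq:
  fixes k K c0 N :: real
  assumes k: "0 < k" "k \<le> 1/2" and K: "0 \<le> K" and c0: "2 \<le> c0" "8192 * (2*K + 6) / k^5 \<le> c0"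
    and N: "N \<le> K * (c0 + 1)^2 + 2"
  shows "2 * N * std_normal_density c0
     \<le> (1/2) * std_normal_density (c0 - k) * k / c0 - (c0 + 1) * std_normal_density (c0 + 1)"
proof -
  define p where "p = std_normal_density c0"
  have p0: "0 < p" unfolding p_def using normal_density_pos[of 1 0 c0] by simp
  have e1: "exp (k * c0 / 2) \<le> exp ((2*k*c0 - k^2)/2)"
    using k c0 by (simp add: power2_eq_square)
  have py: "p * exp (k * c0 / 2) \<le> std_normal_density (c0 - k)"
    unfolding phi_shift p_def[symmetric] using e1 p0 by simp
  have p1: "std_normal_density (c0 + 1) \<le> p" unfolding p_def using phi_mono[of c0 "c0+1"] c0 by simp
  have ex: "(k * c0 / 2)^4 / 64 \<le> exp (k * c0 / 2)" using k c0 by (intro exp_poly4) simp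
  have R: "(c0 + 1) + 2 * N \<le> (2*K+6) * 4 * c0^2"
  proof -
    have "2*c0 \<le> c0*c0" using c0(1) by (intro mult_right_mono) auto
    moreover have "(c0+1)^2 = c0*c0 + 2*c0 + 1" "4 * c0^2 = 4*(c0*c0)" by (simp_all add: power2_eq_square algebra_simps)
    ultimately have "(c0+1)^2 \<le> 4 * c0^2" using c0 by linarith
    moreover have u1: "1 \<le> c0 + 1" using c0(1) by simp
    moreover have "(c0+1)*1 \<le> (c0+1)*(c0+1)" using u1 by (intro mult_left_mono) auto
    then have "c0 + 1 \<le> (c0+1)^2" by (simp add: power2_eq_square)
    ultimately have "(c0 + 1) + 2 * (K * (c0 + 1)^2 + 2) \<le> (2*K+6) * (c0+1)^2"
    proof -
      define v where "v = (c0+1)^2"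
      have "c0 + 1 \<le> v" "1 \<le> v" using \<open>c0 + 1 \<le> (c0+1)^2\<close> u1 unfolding v_def by linarith+
      then have "(c0 + 1) + 2 * (K * v + 2) \<le> (2*K+6) * v" by (simp add: ring_distribs)
      then show ?thesis unfolding v_def .
    qed
    also have "\<dots> \<le> (2*K+6) * (4 * c0^2)" using K \<open>(c0+1)^2 \<le> 4 * c0^2\<close> by (intro mult_left_mono) auto
    finally have X: "(c0 + 1) + 2 * (K * (c0 + 1)^2 + 2) \<le> (2*K+6) * (4 * c0^2)" .
    have "(2*K+6) * (4 * c0^2) = (2*K+6) * 4 * c0^2" by simp
    moreover
    { fix P R :: real assume "c0 + 1 + 2 * (P + 2) \<le> R" "N \<le> P + 2"
      then have "c0 + 1 + 2 * N \<le> R" by (simp add: algebra_simps) }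
    ultimately show ?thesis using X N by metis
  qed
  have Q: "(2*K+6) * 4 * c0^2 \<le> (1/2) * (k * c0 / 2)^4 / 64 * k / c0"
  proof -
    have "8192 * (2*K + 6) \<le> c0 * k^5" using c0(2) k by (simp add: field_simps)
    then have I1: "8192 * (2*K + 6) * c0^2 \<le> c0 * k^5 * c0^2" by (intro mult_right_mono) auto
    have E: "(1/2) * (k * c0 / 2)^4 / 64 * k / c0 = c0 * k^5 * c0^2 / 2048"
      using c0 by (simp add: field_simps power_mult_distrib eval_nat_numeral) 
    have "(2*K+6) * 4 * c0^2 = (8192 * (2*K + 6) * c0^2) / 2048" by simp
    also have "\<dots> \<le> (c0 * k^5 * c0^2) / 2048" using I1 by (intro divide_right_mono) auto
    also have "\<dots> = (1/2) * (k * c0 / 2)^4 / 64 * k / c0" using E by simp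
    finally show ?thesis .
  qed
  have "(c0 + 1) * std_normal_density (c0 + 1) + 2 * N * p \<le> ((c0 + 1) + 2 * N) * p"
  proof -
    have "(c0 + 1) * std_normal_density (c0 + 1) \<le> (c0 + 1) * p" using p1 c0 by (intro mult_left_mono) auto
    from add_right_mono[OF this, of "2 * N * p"] show ?thesis by (simp add: distrib_right)
  qed
  also have "\<dots> \<le> ((1/2) * (k * c0 / 2)^4 / 64 * k / c0) * p"
    using R Q p0 by (intro mult_right_mono) auto
  also have "\<dots> \<le> ((1/2) * exp (k * c0 / 2) * k / c0) * p"
    using ex p0 k c0 by (intro mult_right_mono divide_right_mono mult_left_mono) auto
  also have "\<dots> = (1/2) * (p * exp (k * c0 / 2)) * k / c0" by simp
  also have "\<dots> \<le> (1/2) * std_normal_density (c0 - k) * k / c0"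
    using py k c0 by (intro mult_right_mono divide_right_mono mult_left_mono) auto
  finally show ?thesis unfolding p_def by simp
qed


lemma set_conv1:
  fixes \<sigma>W r \<delta> S :: real
  assumes "0 < \<sigma>W" "0 < r"
  shows "(-\<delta> \<le> \<sigma>W * S / (r*r)) = (- (S / r) \<le> \<delta> * r / \<sigma>W)"
  using assms by (auto simp: field_simps)

lemma set_conv2:
  fixes \<sigma>W r \<delta> S :: real
  assumes "0 < \<sigma>W" "0 < r"
  shows "(\<delta> < \<sigma>W * S / (r*r)) = (\<delta> * r / \<sigma>W < S / r)"
  using assms by (simp add: field_simps)

lemma lower_value:
  fixes \<gamma> \<sigma>W \<mu> \<sigma> eps c0 :: real
  assumes g0: "0 < \<gamma>" and g1: "\<gamma> < 1" and s: "0 < \<sigma>" and sw: "0 < \<sigma>W"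
    and e: "0 < eps" "eps \<le> 1" and Pc0: "Phi c0 = \<gamma>" and c02: "2 \<le> c0"
    and cC: "8192 * (2 * (2 * \<sigma>W / (eps / 2 * \<sigma>))^2 + 6) / (eps/2)^5 \<le> c0"
  shows "0 \<le> value_fun \<sigma>W \<gamma> (\<mu> + (c0 - eps) * \<sigma>) \<mu> \<sigma>"
proof -
  define k where "k = eps / 2"
  define K where "K = (2 * \<sigma>W / (k * \<sigma>))^2"
  define c where "c = c0 - eps"
  define lam where "lam = \<mu> + c * \<sigma>"
  define y where "y = c0 - k"
  define \<delta> where "\<delta> = k * \<sigma> / 2"
  define m where "m = lam + \<delta>"
  define n where "n = nat \<lceil>(2 * \<sigma>W * (c0 + 1) / (k * \<sigma>))^2\<rceil>"
  define r where "r = sqrt (real n)"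
  define t where "t = \<delta> * r / \<sigma>W"
  have k: "0 < k" "k \<le> 1/2" using e by (auto simp: k_def)
  have K0: "0 \<le> K" by (simp add: K_def)
  have cC': "8192 * (2*K + 6) / k^5 \<le> c0" using cC by (simp add: K_def k_def)
  have c1: "1 \<le> c" using e c02 by (simp add: c_def)
  have y: "0 < y" "y \<le> c0" "c + k = y" using k c02 e by (auto simp: y_def c_def k_def)
  have \<delta>0: "0 < \<delta>" using k s by (simp add: \<delta>_def)
  have Xpos: "0 < 2 * \<sigma>W * (c0 + 1) / (k * \<sigma>)" using sw c02 k s by simp
  have n0: "0 < n" unfolding n_def using Xpos sw c02 k s by simp
  have r0: "0 < r" using n0 by (simp add: r_def)
  have rr: "r * r = real n" using n0 by (simp add: r_def)
  have nge: "(2 * \<sigma>W * (c0 + 1) / (k * \<sigma>))^2 \<le> real n"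
    unfolding n_def by linarith
  have rge: "2 * \<sigma>W * (c0 + 1) / (k * \<sigma>) \<le> r"
    unfolding r_def by (rule real_le_rsqrt[OF nge])
  have t1: "c0 + 1 \<le> t"
  proof -
    have "2 * \<sigma>W * (c0 + 1) \<le> r * (k * \<sigma>)" using rge k s by (simp add: field_simps)
    then show ?thesis unfolding t_def \<delta>_def using sw by (simp add: field_simps)
  qed
  have Nb: "real n + 1 \<le> K * (c0 + 1)^2 + 2"
  proof -
    define X where "X = (2 * \<sigma>W * (c0 + 1) / (k * \<sigma>))^2"
    have "0 \<le> X" unfolding X_def by simp
    then have "0 \<le> \<lceil>X\<rceil>" by simp
    then have "real n = real_of_int \<lceil>X\<rceil>" unfolding n_def X_def[symmetric] by simp
    then have "real n \<le> (2 * \<sigma>W * (c0 + 1) / (k * \<sigma>))^2 + 1"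
      using of_int_ceiling_le_add_one[of X] unfolding X_def by simp
    moreover have "(2 * \<sigma>W * (c0 + 1) / (k * \<sigma>))^2 = K * (c0 + 1)^2"
      unfolding K_def by (simp add: power_mult_distrib power_divide)
    ultimately show ?thesis by simp
  qed
  note MI = main_ineq[OF k K0 c02 cC' Nb]
  note PL = payoff_lower[OF g0 g1 s sw n0 \<delta>0 \<delta>0, of lam m \<mu>]
  have lamm: "lam = m - \<delta>" by (simp add: m_def)
  define A1 where "A1 = {w \<in> space Nw. -\<delta> \<le> \<sigma>W * (\<Sum>i<n. w i) / n}"
  define A2 where "A2 = {w \<in> space Nw. \<delta> < \<sigma>W * (\<Sum>i<n. w i) / n}"
  have PA1: "measure Nw A1 = Phi t"
  proof -
    have "A1 = {w \<in> space Nw. - ((\<Sum>i<n. w i) / sqrt n) \<le> t}"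
      unfolding A1_def t_def using set_conv1[OF sw r0] rr by (simp add: r_def)
    then show ?thesis using sum_tail(2)[OF n0] by simp
  qed
  have PA2: "measure Nw A2 = Qf t"
  proof -
    have "A2 = {w \<in> space Nw. t < (\<Sum>i<n. w i) / sqrt n}"
      unfolding A2_def t_def using set_conv2[OF sw r0] rr by (simp add: r_def)
    then show ?thesis using sum_tail(1)[OF n0] by simp
  qed
  have E1: "integral\<^sup>L (M0 \<mu> \<sigma>) (\<lambda>x. (x - lam) * indicator {m + \<delta><..} x) = \<sigma> * (std_normal_density y - c * Qf y)"
  proof -
    have "m + \<delta> = \<mu> + y * \<sigma>" unfolding m_def lam_def \<delta>_def y_def c_def k_def by (simp add: algebra_simps)
    then show ?thesis unfolding lam_def using M0_trunc[OF s, of y \<mu> c] y by simp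
  qed
  have E2: "integral\<^sup>L (M0 \<mu> \<sigma>) (\<lambda>x. max (lam - x) 0) \<le> \<sigma> * (c + 1)"
    unfolding lam_def using M0_negpart[OF s, of \<mu> c] c1 by simp
  define a where "a = \<gamma> ^ Suc n"
  define L0 where "L0 = (1/2) * std_normal_density (c0 - k) * k / c0 - (c0 + 1) * std_normal_density (c0 + 1)"
  have PL': "(\<mu> - lam) * ((1 - a) / (1 - \<gamma>)) + a / (1 - \<gamma>) * (\<sigma> * (std_normal_density y - c * Qf y) * Phi t
            - integral\<^sup>L (M0 \<mu> \<sigma>) (\<lambda>x. max (lam - x) 0) * Qf t)
     \<le> stop_payoff \<sigma>W \<mu> \<sigma> \<gamma> lam (tau_n \<sigma>W n m)"
    using PL[OF lamm] unfolding a_def A1_def[symmetric] A2_def[symmetric] PA1 PA2 E1 .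
  have X: "std_normal_density y * k / c0 \<le> std_normal_density y - c * Qf y"
  proof -
    have "c * Qf y \<le> c * (std_normal_density y / y)" using Qf_upper[OF y(1)] c1 by (intro mult_left_mono) auto
    moreover have "std_normal_density y - c * (std_normal_density y / y) = std_normal_density y * k / y"
    proof -
      have "y * std_normal_density y = c * std_normal_density y + k * std_normal_density y"
        using y(3) by (simp add: distrib_right[symmetric])
      then show ?thesis using y(1) by (simp add: field_simps)
    qed
    moreover have "std_normal_density y * k / c0 \<le> std_normal_density y * k / y"
      using y k by (intro divide_left_mono mult_nonneg_nonneg) auto
    ultimately show ?thesis by linarith
  qed
  have X0: "0 \<le> std_normal_density y * k / c0" using k c02 by simp
  have Qt: "Qf t \<le> std_normal_density (c0 + 1)"
  proof -
    have "Qf t \<le> std_normal_density t / t" using Qf_upper[of t] t1 c02 by simp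
    also have "\<dots> \<le> std_normal_density t / 1" using t1 c02 by (intro divide_left_mono) auto
    also have "\<dots> = std_normal_density t" by simp
    also have "\<dots> \<le> std_normal_density (c0 + 1)" using phi_mono[of "c0+1" t] t1 c02 by simp
    finally show ?thesis .
  qed
  have Pt: "1/2 \<le> Phi t"
  proof -
    have "Qf t \<le> 1/2" using Qt phi_le_half[of "c0+1"] by simp
    then show ?thesis using Phi_Qf[of t] by simp
  qed
  have Qt0: "0 \<le> Qf t" by (rule Qf_nonneg)
  have inner: "\<sigma> * L0 \<le> \<sigma> * (std_normal_density y - c * Qf y) * Phi t - integral\<^sup>L (M0 \<mu> \<sigma>) (\<lambda>x. max (lam - x) 0) * Qf t"
  proof -
    have "\<sigma> * (std_normal_density y * k / c0) * (1/2) \<le> \<sigma> * (std_normal_density y - c * Qf y) * Phi t"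
      using X X0 Pt s by (intro mult_mono mult_left_mono) auto
    moreover have "integral\<^sup>L (M0 \<mu> \<sigma>) (\<lambda>x. max (lam - x) 0) * Qf t \<le> (\<sigma> * (c0 + 1)) * std_normal_density (c0 + 1)"
    proof (rule mult_mono)
      show "integral\<^sup>L (M0 \<mu> \<sigma>) (\<lambda>x. max (lam - x) 0) \<le> \<sigma> * (c0 + 1)"
        using E2 s e by (smt (verit) c_def mult_left_mono)
    qed (use Qt Qt0 s c02 in auto)
    ultimately show ?thesis unfolding L0_def y_def by (simp add: algebra_simps)
  qed
  have L0le: "L0 \<le> 1/4"
  proof -
    have "std_normal_density (c0 - k) * k / c0 \<le> (1/2) * 1"
    proof -
      have "k / c0 \<le> 1" using k c02 by simp
      then have "std_normal_density (c0 - k) * (k / c0) \<le> (1/2) * 1"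
        using phi_le_half[of "c0 - k"] k c02 by (intro mult_mono) auto
      then show ?thesis by simp
    qed
    moreover have "0 \<le> (c0 + 1) * std_normal_density (c0 + 1)" using c02 by simp
    moreover have "L0 = (1/2) * (std_normal_density (c0 - k) * k / c0) - (c0 + 1) * std_normal_density (c0 + 1)"
      unfolding L0_def by simp
    ultimately show ?thesis by linarith
  qed
  have q: "1 - \<gamma> \<le> std_normal_density c0 / c0"
    using Phi_Qf[of c0] Pc0 Qf_upper[of c0] c02 by simp
  have bern: "1 - a \<le> (real n + 1) * (1 - \<gamma>)"
    using Bernoulli_inequality[of "\<gamma> - 1" "Suc n"] g0 unfolding a_def by (simp add: algebra_simps)
  have p0: "0 < std_normal_density c0" using normal_density_pos[of 1 0 c0] by simp
  have step1: "(real n + 1) * (1 - \<gamma>) \<le> (real n + 1) * std_normal_density c0 / c0"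
  proof -
    have "(real n + 1) * (1 - \<gamma>) \<le> (real n + 1) * (std_normal_density c0 / c0)"
      using q by (intro mult_left_mono) auto
    then show ?thesis by simp
  qed
  have step2: "(real n + 1) * std_normal_density c0 / c0 \<le> (real n + 1) * std_normal_density c0"
    using c02 p0 by (intro divide_left_mono[of 1 c0, simplified]) auto
  define PP where "PP = (real n + 1) * std_normal_density c0"
  have eqPP: "2 * PP = 2 * (real n + 1) * std_normal_density c0" unfolding PP_def by (simp only: mult.assoc)
  have MI': "2 * PP \<le> L0" unfolding eqPP L0_def by (rule MI)
  have PP0: "0 \<le> PP" unfolding PP_def using p0 by simp
  have a_half: "1/2 \<le> a"
  proof -
    have "(real n + 1) * std_normal_density c0 \<le> 1/8" using MI' L0le unfolding PP_def[symmetric] by linarith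
    then show ?thesis using bern step1 step2 by linarith
  qed
  have L0pos: "0 \<le> L0" using MI' PP0 by linarith
  have "\<gamma> ^ Suc n \<le> 1" using g0 g1 by (intro power_le_one) auto
  then have a1: "0 \<le> 1 - a" unfolding a_def by simp
  have final: "c * (1 - a) \<le> a * L0"
  proof -
    have "c * (1 - a) \<le> c0 * ((real n + 1) * (1 - \<gamma>))"
      using bern c1 e a1 by (intro mult_mono) (auto simp: c_def)
    also have "\<dots> \<le> c0 * ((real n + 1) * std_normal_density c0 / c0)"
      using step1 c02 by (intro mult_left_mono) auto
    also have "\<dots> = (real n + 1) * std_normal_density c0" using c02 by simp
    also have "\<dots> \<le> L0 / 2" using MI' unfolding PP_def by simp
    also have "\<dots> = (1/2) * L0" by simp
    also have "\<dots> \<le> a * L0" using a_half L0pos by (rule mult_right_mono)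
    finally show ?thesis .
  qed
  have "0 \<le> (\<mu> - lam) * ((1 - a) / (1 - \<gamma>)) + a / (1 - \<gamma>) * (\<sigma> * (std_normal_density y - c * Qf y) * Phi t
            - integral\<^sup>L (M0 \<mu> \<sigma>) (\<lambda>x. max (lam - x) 0) * Qf t)"
  proof -
    define Z where "Z = \<sigma> * (std_normal_density y - c * Qf y) * Phi t - integral\<^sup>L (M0 \<mu> \<sigma>) (\<lambda>x. max (lam - x) 0) * Qf t"
    have "a * (\<sigma> * L0) \<le> a * Z" using inner a_half unfolding Z_def by (intro mult_left_mono) auto
    moreover have "\<sigma> * (c * (1 - a)) \<le> \<sigma> * (a * L0)" using final s by (intro mult_left_mono) auto
    ultimately have "0 \<le> (- (c * \<sigma>) * (1 - a) + a * Z)" by (simp add: algebra_simps)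
    then have "0 \<le> (- (c * \<sigma>) * (1 - a) + a * Z) / (1 - \<gamma>)" using g1 by simp
    moreover have "(\<mu> - lam) * ((1 - a) / (1 - \<gamma>)) + a / (1 - \<gamma>) * Z = (- (c * \<sigma>) * (1 - a) + a * Z) / (1 - \<gamma>)"
    proof -
      have gen: "\<And>X Y D. X * (Y / D) + a / D * Z = (X * Y + a * Z) / D" by (simp add: add_divide_distrib)
      have ml: "\<mu> - lam = - (c * \<sigma>)" unfolding lam_def by simp
      have "(\<mu> - lam) * ((1 - a) / (1 - \<gamma>)) + a / (1 - \<gamma>) * Z = ((\<mu> - lam) * (1 - a) + a * Z) / (1 - \<gamma>)"
        by (rule gen)
      then show ?thesis unfolding ml .
    qed
    ultimately show ?thesis unfolding Z_def by simp
  qed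
  also note PL'
  also have "stop_payoff \<sigma>W \<mu> \<sigma> \<gamma> lam (tau_n \<sigma>W n m) \<le> value_fun \<sigma>W \<gamma> lam \<mu> \<sigma>"
    by (rule value_facts(2)[OF g0 g1 s tau_n_admissible[OF n0]])
  finally show ?thesis unfolding lam_def c_def .
qed


theorem theorem1:
  fixes \<sigma>W \<mu> \<sigma> :: real
  assumes "\<sigma>W > 0" and "\<sigma> > 0"
  shows "((\<lambda>\<gamma>. gittins_index \<sigma>W \<gamma> \<mu> \<sigma> - (\<mu> + Phi_inv \<gamma> * \<sigma>)) \<longlongrightarrow> 0) (at_left 1)"
proof (rule tendstoI)
  fix \<epsilon> :: real assume \<epsilon>: "0 < \<epsilon>"
  have sw: "0 < \<sigma>W" and s: "0 < \<sigma>" using assms by auto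
  define eps where "eps = min 1 (\<epsilon> / (2 * \<sigma>))"
  have e: "0 < eps" "eps \<le> 1" "eps * \<sigma> \<le> \<epsilon> / 2"
    using \<epsilon> s by (auto simp: eps_def min_def field_simps)
  define C where "C = max 2 (8192 * (2 * (2 * \<sigma>W / (eps / 2 * \<sigma>))^2 + 6) / (eps/2)^5)"
  have ev1: "eventually (\<lambda>\<gamma>. C \<le> Phi_inv \<gamma>) (at_left (1::real))"
    using Phi_inv_at_top by (simp add: filterlim_at_top)
  have p01: "max 0 (Phi 0) < 1" using Phi_lt1[of 0] by simp
  have ev2: "eventually (\<lambda>\<gamma>. max 0 (Phi 0) < \<gamma> \<and> \<gamma> < 1) (at_left (1::real))"
    by (rule eventually_at_leftI[OF _ p01]) auto
  show "eventually (\<lambda>\<gamma>. dist (gittins_index \<sigma>W \<gamma> \<mu> \<sigma> - (\<mu> + Phi_inv \<gamma> * \<sigma>)) 0 < \<epsilon>) (at_left 1)"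
    using ev1 ev2
  proof eventually_elim
    case (elim \<gamma>)
    define c0 where "c0 = Phi_inv \<gamma>"
    have g0: "0 < \<gamma>" and g1: "\<gamma> < 1" and gP: "Phi 0 \<le> \<gamma>" using elim by auto
    have Pc0: "Phi c0 = \<gamma>" unfolding c0_def by (rule Phi_inv_eq[OF gP g1])
    have c02: "2 \<le> c0" and cC: "8192 * (2 * (2 * \<sigma>W / (eps / 2 * \<sigma>))^2 + 6) / (eps/2)^5 \<le> c0"
      using elim(1) unfolding c0_def C_def by auto
    define S where "S = {lam. 0 \<le> value_fun \<sigma>W \<gamma> lam \<mu> \<sigma>}"
    have low: "\<mu> + (c0 - eps) * \<sigma> \<in> S"
      unfolding S_def using lower_value[OF g0 g1 s sw e(1,2) Pc0 c02 cC] by simp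
    have up: "lam \<le> \<mu> + c0 * \<sigma>" if "lam \<in> S" for lam
    proof (rule ccontr)
      assume "\<not> lam \<le> \<mu> + c0 * \<sigma>"
      define c where "c = (lam - \<mu>) / \<sigma>"
      have lc: "lam = \<mu> + c * \<sigma>" using s by (simp add: c_def)
      have cc: "c0 \<le> c" using \<open>\<not> lam \<le> \<mu> + c0 * \<sigma>\<close> s by (simp add: c_def field_simps)
      have v: "value_fun \<sigma>W \<gamma> lam \<mu> \<sigma> \<le> (\<mu> - lam) * (1 + \<gamma>) + \<gamma>^2 / (1 - \<gamma>) * integral\<^sup>L (M0 \<mu> \<sigma>) (\<lambda>x. max (x - lam) 0)"
        by (rule value_facts(1)[OF g0 g1 s])
      have "value_fun \<sigma>W \<gamma> lam \<mu> \<sigma> < 0"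
        using v U_neg[OF g0 g1 s c02 Pc0 cc, of \<mu>] unfolding lc by linarith
      then show False using that unfolding S_def by simp
    qed
    have ne: "S \<noteq> {}" using low by auto
    have bdd: "bdd_above S" using up by (intro bdd_aboveI) auto
    have G: "gittins_index \<sigma>W \<gamma> \<mu> \<sigma> = Sup S" unfolding gittins_index_def S_def ..
    have G1: "\<mu> + (c0 - eps) * \<sigma> \<le> Sup S" by (rule cSup_upper[OF low bdd])
    have G2: "Sup S \<le> \<mu> + c0 * \<sigma>" by (rule cSup_least[OF ne up])
    have "\<bar>Sup S - (\<mu> + c0 * \<sigma>)\<bar> \<le> eps * \<sigma>" using G1 G2 by (simp add: algebra_simps)
    then show ?case unfolding G dist_real_def c0_def[symmetric] using e \<epsilon> by simp
  qed
qed


end
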